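(* Let $d\ge1$, $L_{2d}=2U\oplus 2E_8(-1)\oplus\langle -2d\rangle$, and let $r\in L_{2d}$ be a primitive vector with $r^2=-2d$. If $\mathrm{div}(r)=2d$, then $r^\perp_{L_{2d}}\cong 2U\oplus 2E_8(-1)$. If $\mathrm{div}(r)=d$, then either $r^\perp_{L_{2d}}\cong U\oplus 2E_8(-1)\oplus\langle 2\rangle\oplus\langle -2\rangle$ or $r^\perp_{L_{2d}}\cong U\oplus 2E_8(-1)\oplus U(2)$.
   Context: $U$ is the hyperbolic plane, $U(2)$ is $U$ with form multiplied by $2$, $E_8(-1)$ is the negative definite $E_8$ lattice, $\langle m\rangle$ is the rank one lattice with generator of square $m$. For $l\in L$, $\mathrm{div}(l)$ is the positive generator of the ideal $(l,L)\subset\mathbb Z$; $r^\perp_{L_{2d}}$ is the orthogonal complement of $r$ in $L_{2d}$. *)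

theory Defs
  imports Main
begin

text \<open>An integral lattice given by a Gram matrix: a pair (n, G), the lattice being
  Z^n (vectors nat => int vanishing from index n on) with bilinear form G.\<close>

type_synonym glat = "nat \<times> (nat \<Rightarrow> nat \<Rightarrow> int)"

definition lvecs :: "glat \<Rightarrow> (nat \<Rightarrow> int) set" where
  "lvecs L = {v. \<forall>i\<ge>fst L. v i = 0}"

definition bil :: "glat \<Rightarrow> (nat \<Rightarrow> int) \<Rightarrow> (nat \<Rightarrow> int) \<Rightarrow> int" where
  "bil L x y = (\<Sum>i<fst L. \<Sum>j<fst L. x i * snd L i j * y j)"

definition osum :: "glat \<Rightarrow> glat \<Rightarrow> glat" (infixr "\<oplus>" 65) where
  "osum L M = (fst L + fst M,
     (\<lambda>i j. if i < fst L \<and> j < fst L then snd L i j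
            else if fst L \<le> i \<and> i < fst L + fst M \<and> fst L \<le> j \<and> j < fst L + fst M
                 then snd M (i - fst L) (j - fst L) else 0))"

definition Hyp :: glat where
  "Hyp = (2, (\<lambda>i j. if i < 2 \<and> j < 2 \<and> i \<noteq> j then 1 else 0))"

definition Hyp2 :: glat where
  "Hyp2 = (2, (\<lambda>i j. if i < 2 \<and> j < 2 \<and> i \<noteq> j then 2 else 0))"

definition rk1 :: "int \<Rightarrow> glat" where
  "rk1 m = (1, (\<lambda>i j. if i = 0 \<and> j = 0 then m else 0))"

text \<open>E8(-1): negative of the E8 Cartan matrix; Dynkin diagram is the chain
  0-1-2-3-4-5-6 with node 7 attached to node 4.\<close>
definition e8_adj :: "nat \<Rightarrow> nat \<Rightarrow> bool" where
  "e8_adj i j = ((i < 7 \<and> j < 7 \<and> (i = j + 1 \<or> j = i + 1)) \<or> (i = 4 \<and> j = 7) \<or> (i = 7 \<and> j = 4))"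

definition E8neg :: glat where
  "E8neg = (8, (\<lambda>i j. if i < 8 \<and> j < 8 then (if i = j then -2 else if e8_adj i j then 1 else 0) else 0))"

definition L2d :: "int \<Rightarrow> glat" where
  "L2d d = Hyp \<oplus> Hyp \<oplus> E8neg \<oplus> E8neg \<oplus> rk1 (-2 * d)"

definition primitive :: "glat \<Rightarrow> (nat \<Rightarrow> int) \<Rightarrow> bool" where
  "primitive L r \<longleftrightarrow> r \<in> lvecs L \<and> r \<noteq> (\<lambda>_. 0) \<and>
     (\<forall>k::int. \<forall>v\<in>lvecs L. r = (\<lambda>i. k * v i) \<longrightarrow> k = 1 \<or> k = -1)"

definition ldiv :: "glat \<Rightarrow> (nat \<Rightarrow> int) \<Rightarrow> int" where
  "ldiv L r = Gcd {bil L r x | x. x \<in> lvecs L}"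

definition perp :: "glat \<Rightarrow> (nat \<Rightarrow> int) \<Rightarrow> (nat \<Rightarrow> int) set" where
  "perp L r = {x \<in> lvecs L. bil L r x = 0}"

text \<open>A subgroup S of the lattice L, with the restricted form, is isometric to the
  lattice M: there is a Z-basis f 0, ..., f (m-1) of S whose Gram matrix is that of M.\<close>
definition sub_iso :: "glat \<Rightarrow> (nat \<Rightarrow> int) set \<Rightarrow> glat \<Rightarrow> bool" where
  "sub_iso L S M \<longleftrightarrow> (\<exists>f :: nat \<Rightarrow> nat \<Rightarrow> int.
      (\<forall>i<fst M. f i \<in> S) \<and>
      (\<forall>i<fst M. \<forall>j<fst M. bil L (f i) (f j) = snd M i j) \<and>
      (\<forall>x\<in>S. \<exists>!c. c \<in> lvecs M \<and> x = (\<lambda>k. \<Sum>i<fst M. c i * f i k)))"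

end

theory Submission
  imports Defs "HOL-Library.Function_Algebras"
begin


type_synonym vec = "nat \<Rightarrow> int"

lemma minus_fun_apply[simp]: "(f - g) x = f x - (g::'a \<Rightarrow> int) x" by (simp add: fun_diff_def)
lemma uminus_fun_apply[simp]: "(- f) x = - (f::'a \<Rightarrow> int) x" by (simp add: fun_Compl_def)

definition sc :: "int \<Rightarrow> vec \<Rightarrow> vec" where "sc c x = (\<lambda>i. c * x i)"
definition eps :: "nat \<Rightarrow> vec" where "eps i = (\<lambda>j. if j = i then 1 else 0)"
definition symG :: "glat \<Rightarrow> bool" where "symG L \<longleftrightarrow> (\<forall>i j. snd L i j = snd L j i)"

lemma bil_add1: "bil L (x + y) z = bil L x z + bil L y z"
  by (simp add: bil_def plus_fun_def sum.distrib algebra_simps)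
lemma bil_add2: "bil L z (x + y) = bil L z x + bil L z y"
  by (simp add: bil_def plus_fun_def sum.distrib algebra_simps)
lemma bil_diff1: "bil L (x - y) z = bil L x z - bil L y z"
  by (simp add: bil_def fun_diff_def sum_subtractf algebra_simps)
lemma bil_diff2: "bil L z (x - y) = bil L z x - bil L z y"
  by (simp add: bil_def fun_diff_def sum_subtractf algebra_simps)
lemma bil_sc1: "bil L (sc c x) z = c * bil L x z"
  by (simp add: bil_def sc_def sum_distrib_left algebra_simps)
lemma bil_sc2: "bil L z (sc c x) = c * bil L z x"
  by (simp add: bil_def sc_def sum_distrib_left algebra_simps)
lemma bil_zero1: "bil L 0 z = 0" by (simp add: bil_def)
lemma bil_zero2: "bil L z 0 = 0" by (simp add: bil_def)
lemma bil_neg1: "bil L (- x) z = - bil L x z"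
  by (simp add: bil_def sum_negf fun_Compl_def)
lemma bil_neg2: "bil L z (- x) = - bil L z x"
  by (simp add: bil_def sum_negf fun_Compl_def)

lemmas bil_lin = bil_add1 bil_add2 bil_diff1 bil_diff2 bil_sc1 bil_sc2 bil_zero1 bil_zero2 bil_neg1 bil_neg2

lemma bil_sym: "symG L \<Longrightarrow> bil L x y = bil L y x"
  unfolding bil_def symG_def
  by (subst sum.swap) (simp add: algebra_simps)

lemma bil_eps2: "j < fst L \<Longrightarrow> bil L x (eps j) = (\<Sum>i<fst L. x i * snd L i j)"
  unfolding bil_def eps_def
  by (simp add: if_distrib cong: if_cong)

lemma bil_eps1: assumes "i < fst L" shows "bil L (eps i) y = (\<Sum>j<fst L. snd L i j * y j)"
proof -
  have "bil L (eps i) y = (\<Sum>ia<fst L. if ia = i then (\<Sum>j<fst L. snd L i j * y j) else 0)"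
    unfolding bil_def eps_def by (rule sum.cong) auto
  then show ?thesis using assms by simp
qed

lemma bil_expand: "bil L y x = (\<Sum>j<fst L. x j * bil L y (eps j))"
proof -
  have "bil L y x = (\<Sum>j<fst L. \<Sum>i<fst L. y i * snd L i j * x j)"
    unfolding bil_def by (rule sum.swap)
  also have "\<dots> = (\<Sum>j<fst L. x j * bil L y (eps j))"
    by (rule sum.cong) (auto simp: bil_eps2 sum_distrib_left algebra_simps)
  finally show ?thesis .
qed

lemma even_quad:
  fixes n :: nat and x :: "nat \<Rightarrow> int"
  assumes "\<And>i j. G i j = G j i" and "\<And>i. even (G i i)"
  shows "even (\<Sum>i<n. \<Sum>j<n. x i * G i j * (x j::int))"
proof (induction n)
  case 0 then show ?case by simp
next
  case (Suc n)
  have eq: "(\<Sum>i<Suc n. \<Sum>j<Suc n. x i * G i j * x j) =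
     (\<Sum>i<n. \<Sum>j<n. x i * G i j * x j) + 2 * (\<Sum>i<n. x i * G i n * x n) + x n * G n n * x n"
    using assms(1) by (simp add: sum.distrib sum_distrib_left algebra_simps)
  show ?case unfolding eq using Suc assms(2)[of n] by simp
qed

lemma bil_even: "symG L \<Longrightarrow> (\<forall>i. even (snd L i i)) \<Longrightarrow> even (bil L x x)"
  unfolding bil_def symG_def by (rule even_quad) auto

lemma lvecs_add: "x \<in> lvecs L \<Longrightarrow> y \<in> lvecs L \<Longrightarrow> x + y \<in> lvecs L"
  by (simp add: lvecs_def)
lemma lvecs_diff: "x \<in> lvecs L \<Longrightarrow> y \<in> lvecs L \<Longrightarrow> x - y \<in> lvecs L"
  by (simp add: lvecs_def)
lemma lvecs_sc: "x \<in> lvecs L \<Longrightarrow> sc c x \<in> lvecs L"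
  by (simp add: lvecs_def sc_def)
lemma lvecs_zero: "0 \<in> lvecs L"
  by (simp add: lvecs_def)
lemma lvecs_eps: "i < fst L \<Longrightarrow> eps i \<in> lvecs L"
  by (simp add: lvecs_def eps_def)

definition lincomb :: "(nat \<Rightarrow> int) \<Rightarrow> (nat \<Rightarrow> vec) \<Rightarrow> nat \<Rightarrow> vec" where
  "lincomb c f m = (\<lambda>k. \<Sum>i<m. c i * f i k)"

lemma lincomb_Suc: "lincomb c f (Suc m) = lincomb c f m + sc (c m) (f m)"
  by (simp add: lincomb_def sc_def plus_fun_def)
lemma lincomb_0: "lincomb c f 0 = 0"
  by (simp add: lincomb_def zero_fun_def)
lemma lincomb_lvecs: "(\<forall>i<m. f i \<in> lvecs L) \<Longrightarrow> lincomb c f m \<in> lvecs L"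
  by (induction m) (auto simp: lincomb_Suc lincomb_0 lvecs_zero lvecs_add lvecs_sc)

definition isom :: "glat \<Rightarrow> (vec \<Rightarrow> vec) \<Rightarrow> (vec \<Rightarrow> vec) \<Rightarrow> bool" where
  "isom L g h \<longleftrightarrow> (\<forall>x\<in>lvecs L. g x \<in> lvecs L \<and> h x \<in> lvecs L \<and> h (g x) = x \<and> g (h x) = x)
     \<and> (\<forall>x\<in>lvecs L. \<forall>y\<in>lvecs L. g (x + y) = g x + g y \<and> bil L (g x) (g y) = bil L x y)
     \<and> (\<forall>c. \<forall>x\<in>lvecs L. g (sc c x) = sc c (g x))"

lemma isom_sym: assumes "isom L g h" shows "isom L h g"
proof -
  have A: "\<forall>x\<in>lvecs L. g x \<in> lvecs L \<and> h x \<in> lvecs L \<and> h (g x) = x \<and> g (h x) = x"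
   and B: "\<forall>x\<in>lvecs L. \<forall>y\<in>lvecs L. g (x + y) = g x + g y \<and> bil L (g x) (g y) = bil L x y"
   and C: "\<forall>c. \<forall>x\<in>lvecs L. g (sc c x) = sc c (g x)" using assms unfolding isom_def by auto
  have "h (x + y) = h x + h y \<and> bil L (h x) (h y) = bil L x y" if "x \<in> lvecs L" "y \<in> lvecs L" for x y
  proof -
    have "g (h x + h y) = x + y" using A B that by (simp add: lvecs_add)
    hence "h (x + y) = h (g (h x + h y))" by simp
    also have "\<dots> = h x + h y" using A that lvecs_add by metis
    finally show ?thesis using A B that by metis
  qed
  moreover have "h (sc c x) = sc c (h x)" if "x \<in> lvecs L" for c x
  proof -
    have "g (sc c (h x)) = sc c x" using A C that by simp
    hence "h (sc c x) = h (g (sc c (h x)))" by simp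
    also have "\<dots> = sc c (h x)" using A that lvecs_sc by metis
    finally show ?thesis .
  qed
  ultimately show ?thesis using A unfolding isom_def by auto
qed

lemma isom_id: "isom L id id"
  by (simp add: isom_def)

lemma isom_comp: assumes "isom L g1 h1" "isom L g2 h2" shows "isom L (g2 \<circ> g1) (h1 \<circ> h2)"
  using assms unfolding isom_def by (auto simp: lvecs_add lvecs_sc)

lemma isom_lincomb: assumes "isom L g h" "\<forall>i<m. f i \<in> lvecs L"
  shows "g (lincomb c f m) = lincomb c (\<lambda>i. g (f i)) m"
  using assms(2)
proof (induction m)
  case 0
  have "g 0 = g (0 + 0)" by simp
  also have "\<dots> = g 0 + g 0" using assms(1) lvecs_zero unfolding isom_def by blast
  finally have "g 0 = 0" by simp
  then show ?case by (simp add: lincomb_0 zero_fun_def)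
next
  case (Suc m)
  then have fl: "\<forall>i<m. f i \<in> lvecs L" and fm: "f m \<in> lvecs L" by auto
  have "g (lincomb c f (Suc m)) = g (lincomb c f m) + g (sc (c m) (f m))"
    using assms(1) lincomb_lvecs[OF fl] lvecs_sc[OF fm] unfolding isom_def lincomb_Suc by blast
  also have "\<dots> = lincomb c (\<lambda>i. g (f i)) m + sc (c m) (g (f m))"
    using Suc fl fm assms(1) unfolding isom_def by auto
  finally show ?case unfolding lincomb_Suc .
qed

definition eqv :: "glat \<Rightarrow> vec \<Rightarrow> vec \<Rightarrow> bool" where
  "eqv L x y \<longleftrightarrow> (\<exists>g h. isom L g h \<and> g x = y)"

lemma eqv_refl: "eqv L x x"
  unfolding eqv_def using isom_id by fastforce

lemma eqv_trans: "eqv L x y \<Longrightarrow> eqv L y z \<Longrightarrow> eqv L x z"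
  unfolding eqv_def by (metis comp_apply isom_comp)

lemma eqv_step: "eqv L x y \<Longrightarrow> isom L g h \<Longrightarrow> eqv L x (g y)"
  unfolding eqv_def by (metis comp_apply isom_comp)

lemma eqv_lvecs: "eqv L x y \<Longrightarrow> x \<in> lvecs L \<Longrightarrow> y \<in> lvecs L"
  unfolding eqv_def isom_def by auto

lemma eqv_bil: "eqv L x y \<Longrightarrow> x \<in> lvecs L \<Longrightarrow> bil L y y = bil L x x"
  unfolding eqv_def isom_def by auto

lemma eqv_ldiv: assumes "eqv L x y" "x \<in> lvecs L" shows "ldiv L y = ldiv L x"
proof -
  obtain g h where gh: "isom L g h" "g x = y" using assms unfolding eqv_def by auto
  have "{bil L y z | z. z \<in> lvecs L} = {bil L x z | z. z \<in> lvecs L}"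
  proof (intro equalityI subsetI)
    fix t assume "t \<in> {bil L y z | z. z \<in> lvecs L}"
    then obtain z where z: "z \<in> lvecs L" "t = bil L y z" by auto
    have "t = bil L (g x) (g (h z))" using gh z unfolding isom_def by auto
    also have "\<dots> = bil L x (h z)" proof -
      have "h z \<in> lvecs L" using gh z unfolding isom_def by blast
      then show ?thesis using gh z assms(2) unfolding isom_def by blast
    qed
    finally show "t \<in> {bil L x z | z. z \<in> lvecs L}" using gh z unfolding isom_def by auto
  next
    fix t assume "t \<in> {bil L x z | z. z \<in> lvecs L}"
    then obtain z where z: "z \<in> lvecs L" "t = bil L x z" by auto
    have "t = bil L (g x) (g z)" using gh z assms(2) unfolding isom_def by auto
    then show "t \<in> {bil L y z | z. z \<in> lvecs L}" using gh z unfolding isom_def by auto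
  qed
  then show ?thesis unfolding ldiv_def by simp
qed

lemma transport:
  assumes "eqv L r s" "r \<in> lvecs L" "sub_iso L (perp L s) M"
  shows "sub_iso L (perp L r) M"
proof -
  obtain g h where gh: "isom L g h" "g r = s" using assms unfolding eqv_def by auto
  have hg: "isom L h g" using isom_sym[OF gh(1)] .
  obtain f where f1: "\<forall>i<fst M. f i \<in> perp L s"
     and f2: "\<forall>i<fst M. \<forall>j<fst M. bil L (f i) (f j) = snd M i j"
     and f3: "\<forall>x\<in>perp L s. \<exists>!c. c \<in> lvecs M \<and> x = lincomb c f (fst M)"
    using assms(3) unfolding sub_iso_def lincomb_def by blast
  have fl: "\<forall>i<fst M. f i \<in> lvecs L" using f1 unfolding perp_def by auto
  have sl: "s \<in> lvecs L" using gh assms(2) unfolding isom_def by auto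
  define f' where "f' i = h (f i)" for i
  have f'l: "\<forall>i<fst M. f' i \<in> lvecs L" using fl hg unfolding isom_def f'_def by auto
  have "\<forall>i<fst M. f' i \<in> perp L r"
  proof (intro allI impI)
    fix i assume i: "i < fst M"
    have "bil L r (f' i) = bil L (g r) (g (f' i))" using gh assms(2) f'l i unfolding isom_def by auto
    also have "\<dots> = bil L s (f i)" using gh fl i unfolding f'_def isom_def by auto
    also have "\<dots> = 0" using f1 i unfolding perp_def by auto
    finally show "f' i \<in> perp L r" using f'l i unfolding perp_def by auto
  qed
  moreover have "\<forall>i<fst M. \<forall>j<fst M. bil L (f' i) (f' j) = snd M i j"
    using f2 fl hg unfolding f'_def isom_def by auto
  moreover have "\<forall>x\<in>perp L r. \<exists>!c. c \<in> lvecs M \<and> x = lincomb c f' (fst M)"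
  proof
    fix x assume x: "x \<in> perp L r"
    have xl: "x \<in> lvecs L" using x unfolding perp_def by auto
    have "bil L s (g x) = bil L r x" using gh assms(2) xl unfolding isom_def by auto
    hence gx: "g x \<in> perp L s" using x gh xl unfolding perp_def isom_def by auto
    obtain c where c: "c \<in> lvecs M" "g x = lincomb c f (fst M)"
      and cu: "\<And>c'. c' \<in> lvecs M \<Longrightarrow> g x = lincomb c' f (fst M) \<Longrightarrow> c' = c"
      using f3 gx by metis
    have "x = h (g x)" using gh xl unfolding isom_def by auto
    also have "\<dots> = lincomb c f' (fst M)" unfolding c(2) f'_def using isom_lincomb[OF hg fl] .
    finally have ex: "x = lincomb c f' (fst M)" .
    show "\<exists>!c. c \<in> lvecs M \<and> x = lincomb c f' (fst M)"
    proof (rule ex1I[of _ c])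
      show "c \<in> lvecs M \<and> x = lincomb c f' (fst M)" using c ex by auto
    next
      fix c' assume c': "c' \<in> lvecs M \<and> x = lincomb c' f' (fst M)"
      have "g x = lincomb c' (\<lambda>i. g (f' i)) (fst M)" using c' isom_lincomb[OF gh(1) f'l] by auto
      also have "\<dots> = lincomb c' f (fst M)"
        unfolding lincomb_def f'_def using hg fl by (intro ext sum.cong) (auto simp: isom_def)
      finally show "c' = c" using cu c' by auto
    qed
  qed
  ultimately show ?thesis unfolding sub_iso_def lincomb_def by blast
qed


definition trv :: "glat \<Rightarrow> vec \<Rightarrow> vec \<Rightarrow> int \<Rightarrow> vec \<Rightarrow> vec" where
  "trv L e a q x = (\<lambda>k. x k - bil L a x * e k + bil L e x * a k - q * bil L e x * e k)"

lemma trv_alt: "trv L e a q x = x - sc (bil L a x) e + sc (bil L e x) a - sc (q * bil L e x) e"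
  by (simp add: trv_def sc_def fun_eq_iff)

lemma trv_lin: "trv L e a q (x + y) = trv L e a q x + trv L e a q y"
  by (simp add: trv_def bil_lin fun_eq_iff algebra_simps)

lemma trv_sc: "trv L e a q (sc c x) = sc c (trv L e a q x)"
  unfolding trv_def bil_sc2 by (simp add: fun_eq_iff algebra_simps sc_def)

lemma trv_lvecs: "e \<in> lvecs L \<Longrightarrow> a \<in> lvecs L \<Longrightarrow> x \<in> lvecs L \<Longrightarrow> trv L e a q x \<in> lvecs L"
  by (simp add: trv_def lvecs_def)

lemma trv_bil:
  assumes "symG L" "bil L e e = 0" "bil L e a = 0" "bil L a a = 2 * q"
  shows "bil L (trv L e a q x) (trv L e a q y) = bil L x y"
proof -
  have s1: "bil L a e = 0" using assms bil_sym by metis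
  have s2: "bil L x e = bil L e x" "bil L x a = bil L a x" "bil L y e = bil L e y" "bil L y a = bil L a y"
    using assms(1) bil_sym by metis+
  show ?thesis unfolding trv_alt
    by (simp add: bil_lin assms s1 s2 algebra_simps)
qed

lemma trv_inv:
  assumes "symG L" "bil L e e = 0" "bil L e a = 0" "bil L a a = 2 * q"
  shows "trv L e (- a) q (trv L e a q x) = x"
proof -
  have s1: "bil L a e = 0" using assms bil_sym by metis
  have "bil L e (trv L e a q x) = bil L e x"
    unfolding trv_alt by (simp add: bil_lin assms s1)
  moreover have "bil L a (trv L e a q x) = bil L a x + 2 * q * bil L e x"
    unfolding trv_alt by (simp add: bil_lin assms s1)
  ultimately show ?thesis
    by (simp add: trv_def bil_lin fun_eq_iff algebra_simps)
qed

lemma trv_isom: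
  assumes "symG L" "e \<in> lvecs L" "a \<in> lvecs L" "bil L e e = 0" "bil L e a = 0" "bil L a a = 2 * q"
  shows "isom L (trv L e a q) (trv L e (- a) q)"
proof -
  have a2: "bil L e (- a) = 0" "bil L (- a) (- a) = 2 * q" using assms by (simp_all add: bil_lin)
  have ma: "- a \<in> lvecs L" using assms(3) by (simp add: lvecs_def)
  have "trv L e a q (trv L e (- a) q x) = x" for x
    using trv_inv[OF assms(1,4) a2] by simp
  then show ?thesis unfolding isom_def
    using trv_inv[OF assms(1,4,5,6)] trv_lvecs[OF assms(2,3)] trv_lvecs[OF assms(2) ma]
      trv_lin trv_sc trv_bil[OF assms(1,4,5,6)] by auto
qed

definition smap :: "(nat \<Rightarrow> int) \<Rightarrow> vec \<Rightarrow> vec" where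
  "smap s x = (\<lambda>i. s i * x i)"

lemma smap_isom:
  assumes "\<And>i. s i * s i = 1" "\<And>i j. snd L i j \<noteq> 0 \<Longrightarrow> s i = s j"
  shows "isom L (smap s) (smap s)"
proof -
  have inv: "smap s (smap s x) = x" for x
    using assms(1) by (simp add: smap_def fun_eq_iff mult.assoc[symmetric])
  have pt: "s i * x i * snd L i j * (s j * y j) = x i * snd L i j * y j" for i j x y
  proof (cases "snd L i j = 0")
    case False
    then have "s i = s j" using assms(2) by auto
    then show ?thesis using assms(1)[of i] by (simp add: algebra_simps)
  qed simp
  have b: "bil L (smap s x) (smap s y) = bil L x y" for x y
    unfolding bil_def smap_def by (intro sum.cong refl) (rule pt)
  show ?thesis unfolding isom_def
    using inv b by (auto simp: smap_def lvecs_def sc_def fun_eq_iff algebra_simps)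
qed


definition e8 :: "nat \<Rightarrow> nat \<Rightarrow> int" where
  "e8 i j = snd E8neg i j"

definition G21 :: "int \<Rightarrow> nat \<Rightarrow> nat \<Rightarrow> int" where
 "G21 d i j = (if i<4 \<and> j<4 then (if (i=0\<and>j=1)\<or>(i=1\<and>j=0)\<or>(i=2\<and>j=3)\<or>(i=3\<and>j=2) then 1 else 0)
   else if 4\<le>i\<and>i<12\<and>4\<le>j\<and>j<12 then e8 (i-4) (j-4)
   else if 12\<le>i\<and>i<20\<and>12\<le>j\<and>j<20 then e8 (i-12) (j-12)
   else if i=20\<and>j=20 then -2*d else 0)"

definition bnd :: "glat \<Rightarrow> bool" where
  "bnd A \<longleftrightarrow> (\<forall>i j. \<not> (i < fst A \<and> j < fst A) \<longrightarrow> snd A i j = 0)"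

lemma osum_snd: "bnd B \<Longrightarrow> snd (A \<oplus> B) i j =
  (if i < fst A then (if j < fst A then snd A i j else 0)
   else if j < fst A then 0 else snd B (i - fst A) (j - fst A))"
  unfolding osum_def bnd_def by (auto simp: not_less)

lemma osum_fst: "fst (A \<oplus> B) = fst A + fst B" by (simp add: osum_def)

lemma bnd_osum: "bnd A \<Longrightarrow> bnd B \<Longrightarrow> bnd (A \<oplus> B)"
  unfolding bnd_def osum_def by auto

lemma bnd_Hyp: "bnd Hyp" by (simp add: bnd_def Hyp_def)
lemma bnd_Hyp2: "bnd Hyp2" by (simp add: bnd_def Hyp2_def)
lemma bnd_E8: "bnd E8neg" by (simp add: bnd_def E8neg_def)
lemma bnd_rk1: "bnd (rk1 m)" by (simp add: bnd_def rk1_def)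
lemma fsts: "fst Hyp = 2" "fst Hyp2 = 2" "fst E8neg = 8" "fst (rk1 m) = 1"
  by (simp_all add: Hyp_def Hyp2_def E8neg_def rk1_def)
lemma snd_Hyp: "snd Hyp i j = (if i < 2 \<and> j < 2 \<and> i \<noteq> j then 1 else 0)" by (simp add: Hyp_def)
lemma snd_rk1: "snd (rk1 m) i j = (if i = 0 \<and> j = 0 then m else 0)" by (simp add: rk1_def)

lemmas osum_simps = osum_snd osum_fst bnd_osum bnd_Hyp bnd_Hyp2 bnd_E8 bnd_rk1 fsts

lemma e8_out: "\<not> (i < 8 \<and> j < 8) \<Longrightarrow> e8 i j = 0" by (auto simp: e8_def E8neg_def)

lemma c1: "i < 2 \<Longrightarrow> j < 2 \<Longrightarrow> snd (L2d d) i j = G21 d i j"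
  unfolding L2d_def by (auto simp add: osum_simps snd_Hyp snd_rk1 G21_def e8_def)

lemma c2: "i < 2 \<Longrightarrow> 2 \<le> j \<Longrightarrow> j < 4 \<Longrightarrow> snd (L2d d) i j = G21 d i j"
  unfolding L2d_def by (auto simp add: osum_simps snd_Hyp snd_rk1 G21_def e8_def)

lemma c3: "i < 2 \<Longrightarrow> 4 \<le> j \<Longrightarrow> j < 12 \<Longrightarrow> snd (L2d d) i j = G21 d i j"
  unfolding L2d_def by (auto simp add: osum_simps snd_Hyp snd_rk1 G21_def e8_def)

lemma c4: "i < 2 \<Longrightarrow> 12 \<le> j \<Longrightarrow> j < 20 \<Longrightarrow> snd (L2d d) i j = G21 d i j"
  unfolding L2d_def by (auto simp add: osum_simps snd_Hyp snd_rk1 G21_def e8_def)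

lemma c5: "i < 2 \<Longrightarrow> j = 20 \<Longrightarrow> snd (L2d d) i j = G21 d i j"
  unfolding L2d_def by (auto simp add: osum_simps snd_Hyp snd_rk1 G21_def e8_def)

lemma c6: "i < 2 \<Longrightarrow> 21 \<le> j \<Longrightarrow> snd (L2d d) i j = G21 d i j"
  unfolding L2d_def by (auto simp add: osum_simps snd_Hyp snd_rk1 G21_def e8_def)

lemma c7: "2 \<le> i \<Longrightarrow> i < 4 \<Longrightarrow> j < 2 \<Longrightarrow> snd (L2d d) i j = G21 d i j"
  unfolding L2d_def by (auto simp add: osum_simps snd_Hyp snd_rk1 G21_def e8_def)

lemma c8: "2 \<le> i \<Longrightarrow> i < 4 \<Longrightarrow> 2 \<le> j \<Longrightarrow> j < 4 \<Longrightarrow> snd (L2d d) i j = G21 d i j"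
  unfolding L2d_def by (auto simp add: osum_simps snd_Hyp snd_rk1 G21_def e8_def)

lemma c9: "2 \<le> i \<Longrightarrow> i < 4 \<Longrightarrow> 4 \<le> j \<Longrightarrow> j < 12 \<Longrightarrow> snd (L2d d) i j = G21 d i j"
  unfolding L2d_def by (auto simp add: osum_simps snd_Hyp snd_rk1 G21_def e8_def)

lemma c10: "2 \<le> i \<Longrightarrow> i < 4 \<Longrightarrow> 12 \<le> j \<Longrightarrow> j < 20 \<Longrightarrow> snd (L2d d) i j = G21 d i j"
  unfolding L2d_def by (auto simp add: osum_simps snd_Hyp snd_rk1 G21_def e8_def)

lemma c11: "2 \<le> i \<Longrightarrow> i < 4 \<Longrightarrow> j = 20 \<Longrightarrow> snd (L2d d) i j = G21 d i j"
  unfolding L2d_def by (auto simp add: osum_simps snd_Hyp snd_rk1 G21_def e8_def)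

lemma c12: "2 \<le> i \<Longrightarrow> i < 4 \<Longrightarrow> 21 \<le> j \<Longrightarrow> snd (L2d d) i j = G21 d i j"
  unfolding L2d_def by (auto simp add: osum_simps snd_Hyp snd_rk1 G21_def e8_def)

lemma c13: "4 \<le> i \<Longrightarrow> i < 12 \<Longrightarrow> j < 2 \<Longrightarrow> snd (L2d d) i j = G21 d i j"
  unfolding L2d_def by (auto simp add: osum_simps snd_Hyp snd_rk1 G21_def e8_def)

lemma c14: "4 \<le> i \<Longrightarrow> i < 12 \<Longrightarrow> 2 \<le> j \<Longrightarrow> j < 4 \<Longrightarrow> snd (L2d d) i j = G21 d i j"
  unfolding L2d_def by (auto simp add: osum_simps snd_Hyp snd_rk1 G21_def e8_def)

lemma c15: "4 \<le> i \<Longrightarrow> i < 12 \<Longrightarrow> 4 \<le> j \<Longrightarrow> j < 12 \<Longrightarrow> snd (L2d d) i j = G21 d i j"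
  unfolding L2d_def by (auto simp add: osum_simps snd_Hyp snd_rk1 G21_def e8_def)

lemma c16: "4 \<le> i \<Longrightarrow> i < 12 \<Longrightarrow> 12 \<le> j \<Longrightarrow> j < 20 \<Longrightarrow> snd (L2d d) i j = G21 d i j"
  unfolding L2d_def by (auto simp add: osum_simps snd_Hyp snd_rk1 G21_def e8_def)

lemma c17: "4 \<le> i \<Longrightarrow> i < 12 \<Longrightarrow> j = 20 \<Longrightarrow> snd (L2d d) i j = G21 d i j"
  unfolding L2d_def by (auto simp add: osum_simps snd_Hyp snd_rk1 G21_def e8_def)

lemma c18: "4 \<le> i \<Longrightarrow> i < 12 \<Longrightarrow> 21 \<le> j \<Longrightarrow> snd (L2d d) i j = G21 d i j"
  unfolding L2d_def by (auto simp add: osum_simps snd_Hyp snd_rk1 G21_def e8_def)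

lemma c19: "12 \<le> i \<Longrightarrow> i < 20 \<Longrightarrow> j < 2 \<Longrightarrow> snd (L2d d) i j = G21 d i j"
  unfolding L2d_def by (auto simp add: osum_simps snd_Hyp snd_rk1 G21_def e8_def)

lemma c20: "12 \<le> i \<Longrightarrow> i < 20 \<Longrightarrow> 2 \<le> j \<Longrightarrow> j < 4 \<Longrightarrow> snd (L2d d) i j = G21 d i j"
  unfolding L2d_def by (auto simp add: osum_simps snd_Hyp snd_rk1 G21_def e8_def)

lemma c21: "12 \<le> i \<Longrightarrow> i < 20 \<Longrightarrow> 4 \<le> j \<Longrightarrow> j < 12 \<Longrightarrow> snd (L2d d) i j = G21 d i j"
  unfolding L2d_def by (auto simp add: osum_simps snd_Hyp snd_rk1 G21_def e8_def)

lemma c22: "12 \<le> i \<Longrightarrow> i < 20 \<Longrightarrow> 12 \<le> j \<Longrightarrow> j < 20 \<Longrightarrow> snd (L2d d) i j = G21 d i j"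
  unfolding L2d_def by (auto simp add: osum_simps snd_Hyp snd_rk1 G21_def e8_def)

lemma c23: "12 \<le> i \<Longrightarrow> i < 20 \<Longrightarrow> j = 20 \<Longrightarrow> snd (L2d d) i j = G21 d i j"
  unfolding L2d_def by (auto simp add: osum_simps snd_Hyp snd_rk1 G21_def e8_def)

lemma c24: "12 \<le> i \<Longrightarrow> i < 20 \<Longrightarrow> 21 \<le> j \<Longrightarrow> snd (L2d d) i j = G21 d i j"
  unfolding L2d_def by (auto simp add: osum_simps snd_Hyp snd_rk1 G21_def e8_def)

lemma c25: "i = 20 \<Longrightarrow> j < 2 \<Longrightarrow> snd (L2d d) i j = G21 d i j"
  unfolding L2d_def by (auto simp add: osum_simps snd_Hyp snd_rk1 G21_def e8_def)

lemma c26: "i = 20 \<Longrightarrow> 2 \<le> j \<Longrightarrow> j < 4 \<Longrightarrow> snd (L2d d) i j = G21 d i j"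
  unfolding L2d_def by (auto simp add: osum_simps snd_Hyp snd_rk1 G21_def e8_def)

lemma c27: "i = 20 \<Longrightarrow> 4 \<le> j \<Longrightarrow> j < 12 \<Longrightarrow> snd (L2d d) i j = G21 d i j"
  unfolding L2d_def by (auto simp add: osum_simps snd_Hyp snd_rk1 G21_def e8_def)

lemma c28: "i = 20 \<Longrightarrow> 12 \<le> j \<Longrightarrow> j < 20 \<Longrightarrow> snd (L2d d) i j = G21 d i j"
  unfolding L2d_def by (auto simp add: osum_simps snd_Hyp snd_rk1 G21_def e8_def)

lemma c29: "i = 20 \<Longrightarrow> j = 20 \<Longrightarrow> snd (L2d d) i j = G21 d i j"
  unfolding L2d_def by (auto simp add: osum_simps snd_Hyp snd_rk1 G21_def e8_def)

lemma c30: "i = 20 \<Longrightarrow> 21 \<le> j \<Longrightarrow> snd (L2d d) i j = G21 d i j"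
  unfolding L2d_def by (auto simp add: osum_simps snd_Hyp snd_rk1 G21_def e8_def)

lemma c31: "21 \<le> i \<Longrightarrow> j < 2 \<Longrightarrow> snd (L2d d) i j = G21 d i j"
  unfolding L2d_def by (auto simp add: osum_simps snd_Hyp snd_rk1 G21_def e8_def)

lemma c32: "21 \<le> i \<Longrightarrow> 2 \<le> j \<Longrightarrow> j < 4 \<Longrightarrow> snd (L2d d) i j = G21 d i j"
  unfolding L2d_def by (auto simp add: osum_simps snd_Hyp snd_rk1 G21_def e8_def)

lemma c33: "21 \<le> i \<Longrightarrow> 4 \<le> j \<Longrightarrow> j < 12 \<Longrightarrow> snd (L2d d) i j = G21 d i j"
  unfolding L2d_def by (auto simp add: osum_simps snd_Hyp snd_rk1 G21_def e8_def)

lemma c34: "21 \<le> i \<Longrightarrow> 12 \<le> j \<Longrightarrow> j < 20 \<Longrightarrow> snd (L2d d) i j = G21 d i j"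
  unfolding L2d_def by (auto simp add: osum_simps snd_Hyp snd_rk1 G21_def e8_def)

lemma c35: "21 \<le> i \<Longrightarrow> j = 20 \<Longrightarrow> snd (L2d d) i j = G21 d i j"
  unfolding L2d_def by (auto simp add: osum_simps snd_Hyp snd_rk1 G21_def e8_def)

lemma c36: "21 \<le> i \<Longrightarrow> 21 \<le> j \<Longrightarrow> snd (L2d d) i j = G21 d i j"
  unfolding L2d_def by (auto simp add: osum_simps snd_Hyp snd_rk1 G21_def e8_def)
lemma sndL: "snd (L2d d) i j = G21 d i j"
proof -
  have ci: "i < 2 \<or> (2 \<le> i \<and> i < 4) \<or> (4 \<le> i \<and> i < 12) \<or> (12 \<le> i \<and> i < 20) \<or> i = 20 \<or> 21 \<le> i" by arith
  have cj: "j < 2 \<or> (2 \<le> j \<and> j < 4) \<or> (4 \<le> j \<and> j < 12) \<or> (12 \<le> j \<and> j < 20) \<or> j = 20 \<or> 21 \<le> j" by arith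
  from ci cj show ?thesis
    by (elim disjE conjE) (simp_all add: c1 c2 c3 c4 c5 c6 c7 c8 c9 c10 c11 c12 c13 c14 c15 c16 c17 c18 c19 c20 c21 c22 c23 c24 c25 c26 c27 c28 c29 c30 c31 c32 c33 c34 c35 c36)
qed

lemma fstL: "fst (L2d d) = 21"
  by (simp add: L2d_def osum_simps)

lemma e8_adj_sym: "e8_adj i j = e8_adj j i"
  unfolding e8_adj_def by arith
lemma e8_sym: "e8 i j = e8 j i"
  unfolding e8_def E8neg_def using e8_adj_sym by auto

lemma symL: "symG (L2d d)"
  unfolding symG_def sndL G21_def using e8_sym by auto

lemma evenL: "even (snd (L2d d) i i)"
  by (auto simp: sndL G21_def e8_def E8neg_def)

lemma sum_single: fixes x :: "nat \<Rightarrow> int" and k n :: nat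
  assumes "k < n" shows "(\<Sum>i<n. x i * (if i = k then c else 0)) = x k * c"
proof -
  have "(\<Sum>i<n. x i * (if i = k then c else 0)) = (\<Sum>i\<in>{k}. x i * (if i = k then c else 0))"
    by (rule sum.mono_neutral_right) (auto simp: assms)
  then show ?thesis by simp
qed

lemma G_col1: "G21 d i 1 = (if i = 0 then 1 else 0)" by (simp add: G21_def)
lemma G_col0: "G21 d i 0 = (if i = 1 then 1 else 0)" by (simp add: G21_def)
lemma G_col3: "G21 d i 3 = (if i = 2 then 1 else 0)" by (simp add: G21_def)
lemma G_col2: "G21 d i 2 = (if i = 3 then 1 else 0)" by (simp add: G21_def)
lemma G_col20: "G21 d i 20 = (if i = 20 then -2*d else 0)" by (simp add: G21_def)

lemma bil_epsk: "k < 21 \<Longrightarrow> bil (L2d d) x (eps k) = (\<Sum>i<21. x i * G21 d i k)"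
  using bil_eps2[of k "L2d d" x] by (simp add: fstL sndL)

lemma co_gen: assumes "k < 21" "\<And>i. i < 21 \<Longrightarrow> G21 d i k = (if i = p then c else 0)" "p < 21"
  shows "bil (L2d d) x (eps k) = x p * c"
proof -
  have "bil (L2d d) x (eps k) = (\<Sum>i<21. x i * G21 d i k)" using assms(1) by (simp add: bil_epsk)
  also have "\<dots> = (\<Sum>i<21. x i * (if i = p then c else 0))" using assms(2) by (intro sum.cong) auto
  also have "\<dots> = x p * c" using assms(3) by (rule sum_single)
  finally show ?thesis .
qed

lemma co1: "bil (L2d d) x (eps 1) = x 0"
  using co_gen[of 1 d 0 1 x] by (simp add: G21_def)
lemma co0: "bil (L2d d) x (eps 0) = x 1"
  using co_gen[of 0 d 1 1 x] by (simp add: G21_def)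
lemma co3: "bil (L2d d) x (eps 3) = x 2"
  using co_gen[of 3 d 2 1 x] by (simp add: G21_def)
lemma co2: "bil (L2d d) x (eps 2) = x 3"
  using co_gen[of 2 d 3 1 x] by (simp add: G21_def)
lemma co20: "bil (L2d d) x (eps 20) = -2 * d * x 20"
  using co_gen[of 20 d 20 "-2 * d" x] by (simp add: G21_def)

lemma co1': "bil (L2d d) (eps 1) x = x 0" using co1 bil_sym symL by metis
lemma co0': "bil (L2d d) (eps 0) x = x 1" using co0 bil_sym symL by metis
lemma co3': "bil (L2d d) (eps 3) x = x 2" using co3 bil_sym symL by metis
lemma co2': "bil (L2d d) (eps 2) x = x 3" using co2 bil_sym symL by metis
lemma co20': "bil (L2d d) (eps 20) x = -2 * d * x 20" using co20 bil_sym symL by metis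

lemmas coords = co0 co1 co2 co3 co20 co0' co1' co2' co3' co20'

lemma eps_app: "eps i j = (if j = i then 1 else 0)" by (simp add: eps_def)

lemma eps_lv: "i < 21 \<Longrightarrow> eps i \<in> lvecs (L2d d)"
  by (simp add: lvecs_eps fstL)

lemma nind: fixes x y :: vec assumes "\<And>i. 4 \<le> i \<Longrightarrow> x i = y i" "4 \<le> k" "k < 21"
  shows "bil (L2d d) x (eps k) = bil (L2d d) y (eps k)"
  unfolding bil_epsk[OF assms(3)]
proof (rule sum.cong)
  fix i :: nat assume "i \<in> {..<21}"
  show "x i * G21 d i k = y i * G21 d i k"
    using assms by (cases "4 \<le> i") (auto simp: G21_def)
qed simp

lemma block_sum:
  fixes f :: "nat \<Rightarrow> int"
  assumes "\<And>i. i < 21 \<Longrightarrow> \<not> (a \<le> i \<and> i < a + 8) \<Longrightarrow> f i = 0" "a + 8 \<le> 21"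
  shows "(\<Sum>i<21. f i) = (\<Sum>i<8. f (i + a))"
proof -
  have "(\<Sum>i<21. f i) = (\<Sum>i\<in>{a..<a+8}. f i)"
    by (rule sum.mono_neutral_right) (use assms in auto)
  also have "\<dots> = (\<Sum>i\<in>{0+a..<8+a}. f i)" by (simp add: add.commute)
  also have "\<dots> = (\<Sum>i\<in>{0..<8}. f (i + a))" by (rule sum.shift_bounds_nat_ivl)
  finally show ?thesis by (simp add: atLeast0LessThan)
qed

lemma blockA: assumes "4 \<le> k" "k < 12"
  shows "bil (L2d d) x (eps k) = (\<Sum>i<8. x (i + 4) * e8 i (k - 4))"
proof -
  have "bil (L2d d) x (eps k) = (\<Sum>i<8. x (i + 4) * G21 d (i + 4) k)"
    using assms by (simp add: bil_epsk, subst block_sum) (auto simp: G21_def)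
  also have "\<dots> = (\<Sum>i<8. x (i + 4) * e8 i (k - 4))"
    using assms by (intro sum.cong) (auto simp: G21_def)
  finally show ?thesis .
qed

lemma blockB: assumes "12 \<le> k" "k < 20"
  shows "bil (L2d d) x (eps k) = (\<Sum>i<8. x (i + 12) * e8 i (k - 12))"
proof -
  have "bil (L2d d) x (eps k) = (\<Sum>i<8. x (i + 12) * G21 d (i + 12) k)"
    using assms by (simp add: bil_epsk, subst block_sum) (auto simp: G21_def)
  also have "\<dots> = (\<Sum>i<8. x (i + 12) * e8 i (k - 12))"
    using assms by (intro sum.cong) (auto simp: G21_def)
  finally show ?thesis .
qed

lemma dv8: fixes m q0 q1 q2 q3 q4 q5 q6 q7 :: int
  assumes "m dvd q0" "m dvd q1" "m dvd q2" "m dvd q3" "m dvd q4" "m dvd q5" "m dvd q6" "m dvd q7"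
  shows "m dvd c0 * q0 + c1 * q1 + c2 * q2 + c3 * q3 + c4 * q4 + c5 * q5 + c6 * q6 + c7 * q7"
  by (intro dvd_add dvd_mult assms)

lemma e8_unimod:
  fixes z :: "nat \<Rightarrow> int"
  assumes "\<And>k. k < 8 \<Longrightarrow> m dvd (\<Sum>i<8. z i * e8 i k)"
  shows "i < 8 \<Longrightarrow> m dvd z i"
proof -
  have e: "\<And>k. (\<Sum>i<8. z i * e8 i k) = z 0 * e8 0 k + z 1 * e8 1 k + z 2 * e8 2 k + z 3 * e8 3 k
       + z 4 * e8 4 k + z 5 * e8 5 k + z 6 * e8 6 k + z 7 * e8 7 k"
    by (simp add: eval_nat_numeral)
  have p0: "m dvd -2 * z 0 + z 1" using assms[of 0] unfolding e by (simp add: algebra_simps, simp add: e8_def E8neg_def e8_adj_def)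
  have p1: "m dvd z 0 - 2 * z 1 + z 2" using assms[of 1] unfolding e by (simp add: algebra_simps e8_def E8neg_def e8_adj_def)
  have p2: "m dvd z 1 - 2 * z 2 + z 3" using assms[of 2] unfolding e by (simp add: algebra_simps e8_def E8neg_def e8_adj_def)
  have p3: "m dvd z 2 - 2 * z 3 + z 4" using assms[of 3] unfolding e by (simp add: algebra_simps e8_def E8neg_def e8_adj_def)
  have p4: "m dvd z 3 - 2 * z 4 + z 5 + z 7" using assms[of 4] unfolding e by (simp add: algebra_simps e8_def E8neg_def e8_adj_def)
  have p5: "m dvd z 4 - 2 * z 5 + z 6" using assms[of 5] unfolding e by (simp add: algebra_simps e8_def E8neg_def e8_adj_def)
  have p6: "m dvd z 5 - 2 * z 6" using assms[of 6] unfolding e by (simp add: algebra_simps e8_def E8neg_def e8_adj_def)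
  have p7: "m dvd z 4 - 2 * z 7" using assms[of 7] unfolding e by (simp add: algebra_simps e8_def E8neg_def e8_adj_def)
  note dv = dv8[OF p0 p1 p2 p3 p4 p5 p6 p7]
  assume "i < 8"
  then consider "i = 0" | "i = 1" | "i = 2" | "i = 3" | "i = 4" | "i = 5" | "i = 6" | "i = 7" by linarith
  then show "m dvd z i"
  proof cases
    case 1 show ?thesis using dv[of "-2" "-3" "-4" "-5" "-6" "-4" "-2" "-3"] 1 by (simp add: algebra_simps)
  next
    case 2 show ?thesis using dv[of "-3" "-6" "-8" "-10" "-12" "-8" "-4" "-6"] 2 by (simp add: algebra_simps)
  next
    case 3 show ?thesis using dv[of "-4" "-8" "-12" "-15" "-18" "-12" "-6" "-9"] 3 by (simp add: algebra_simps)
  next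
    case 4 show ?thesis using dv[of "-5" "-10" "-15" "-20" "-24" "-16" "-8" "-12"] 4 by (simp add: algebra_simps)
  next
    case 5 show ?thesis using dv[of "-6" "-12" "-18" "-24" "-30" "-20" "-10" "-15"] 5 by (simp add: algebra_simps)
  next
    case 6 show ?thesis using dv[of "-4" "-8" "-12" "-16" "-20" "-14" "-7" "-10"] 6 by (simp add: algebra_simps)
  next
    case 7 show ?thesis using dv[of "-2" "-4" "-6" "-8" "-10" "-7" "-4" "-5"] 7 by (simp add: algebra_simps)
  next
    case 8 show ?thesis using dv[of "-3" "-6" "-9" "-12" "-15" "-10" "-5" "-8"] 8 by (simp add: algebra_simps)
  qed
qed


lemma co1s: "bil (L2d d) x (eps (Suc 0)) = x 0" using co1 by simp
lemma co1s': "bil (L2d d) (eps (Suc 0)) x = x 0" using co1' by simp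
lemmas coordsS = coords co1s co1s'

lemma trv_app: "trv L e a q x k = x k - bil L a x * e k + bil L e x * a k - q * bil L e x * e k"
  by (simp add: trv_def)

lemma sc_app: "sc c x k = c * x k" by (simp add: sc_def)

lemma bil_sc_eps1: "bil (L2d d) (sc t (eps j)) x = t * bil (L2d d) (eps j) x" by (simp add: bil_lin)

definition opD :: "int \<Rightarrow> int \<Rightarrow> vec \<Rightarrow> vec" where "opD d t = trv (L2d d) (eps 1) (sc t (eps 2)) 0"
definition opB :: "int \<Rightarrow> int \<Rightarrow> vec \<Rightarrow> vec" where "opB d t = trv (L2d d) (eps 1) (sc (-t) (eps 3)) 0"
definition opA :: "int \<Rightarrow> int \<Rightarrow> vec \<Rightarrow> vec" where "opA d t = trv (L2d d) (eps 0) (sc t (eps 2)) 0"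
definition opC :: "int \<Rightarrow> int \<Rightarrow> vec \<Rightarrow> vec" where "opC d t = trv (L2d d) (eps 3) (sc t (eps 0)) 0"

lemma isoU: assumes "i < 4" "j < 4" "bil (L2d d) (eps i) (eps i) = 0" "bil (L2d d) (eps j) (eps j) = 0"
   "bil (L2d d) (eps i) (eps j) = 0"
  shows "isom (L2d d) (trv (L2d d) (eps i) (sc t (eps j)) 0) (trv (L2d d) (eps i) (- sc t (eps j)) 0)"
  using assms by (intro trv_isom symL eps_lv lvecs_sc) (auto simp: bil_lin)

lemma opD_iso: "\<exists>h. isom (L2d d) (opD d t) h"
  unfolding opD_def using isoU[of 1 2 d t] by (auto simp: coordsS eps_app)
lemma opB_iso: "\<exists>h. isom (L2d d) (opB d t) h"
  unfolding opB_def using isoU[of 1 3 d "-t"] by (auto simp: coordsS eps_app)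
lemma opA_iso: "\<exists>h. isom (L2d d) (opA d t) h"
  unfolding opA_def using isoU[of 0 2 d t] by (auto simp: coordsS eps_app)
lemma opC_iso: "\<exists>h. isom (L2d d) (opC d t) h"
  unfolding opC_def using isoU[of 3 0 d t] by (auto simp: coordsS eps_app)

lemma opD_app: "opD d t x k = x k - t * x 3 * eps 1 k + x 0 * t * eps 2 k"
  by (simp add: opD_def trv_app bil_lin coordsS sc_app)
lemma opB_app: "opB d t x k = x k + t * x 2 * eps 1 k - x 0 * t * eps 3 k"
  by (simp add: opB_def trv_app bil_lin coordsS sc_app)
lemma opA_app: "opA d t x k = x k - t * x 3 * eps 0 k + x 1 * t * eps 2 k"
  by (simp add: opA_def trv_app bil_lin coordsS sc_app)
lemma opC_app: "opC d t x k = x k - t * x 1 * eps 3 k + x 2 * t * eps 0 k"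
  by (simp add: opC_def trv_app bil_lin coordsS sc_app)

definition halfq :: "int \<Rightarrow> nat \<Rightarrow> int" where "halfq d k = G21 d k k div 2"

definition opE :: "int \<Rightarrow> nat \<Rightarrow> vec \<Rightarrow> vec" where
  "opE d k = trv (L2d d) (eps 2) (eps k) (halfq d k)"

lemma epsk_eps: assumes "i < 21" "j < 21" shows "bil (L2d d) (eps i) (eps j) = G21 d i j"
proof -
  have "bil (L2d d) (eps i) (eps j) = (\<Sum>ia<21. eps i ia * G21 d ia j)" using assms by (simp add: bil_epsk)
  also have "\<dots> = (\<Sum>ia<21. G21 d ia j * (if ia = i then 1 else 0))" by (rule sum.cong) (auto simp: eps_app)
  also have "\<dots> = G21 d i j" using assms(1) by (simp add: sum_single)
  finally show ?thesis .
qed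

lemma opE_iso: assumes "4 \<le> k" "k < 21" shows "\<exists>h. isom (L2d d) (opE d k) h"
proof -
  have "bil (L2d d) (eps k) (eps k) = 2 * halfq d k"
    using assms evenL[of d k] by (simp add: epsk_eps halfq_def sndL)
  then have "isom (L2d d) (opE d k) (trv (L2d d) (eps 2) (- eps k) (halfq d k))"
    unfolding opE_def using assms by (intro trv_isom symL eps_lv) (auto simp: coordsS eps_app)
  then show ?thesis by blast
qed

lemma opE_app: "4 \<le> k \<Longrightarrow> opE d k x j = x j - bil (L2d d) x (eps k) * eps 2 j + x 3 * eps k j - halfq d k * x 3 * eps 2 j"
  using bil_sym[OF symL, of d "eps k" x] by (simp add: opE_def trv_app coordsS)

definition opF :: "int \<Rightarrow> vec \<Rightarrow> vec \<Rightarrow> vec" where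
  "opF d a = trv (L2d d) (eps 1) a (bil (L2d d) a a div 2)"

lemma opF_iso: assumes "a \<in> lvecs (L2d d)" "a 0 = 0" shows "\<exists>h. isom (L2d d) (opF d a) h"
proof -
  have "even (bil (L2d d) a a)" using bil_even[OF symL] evenL by blast
  then have "bil (L2d d) a a = 2 * (bil (L2d d) a a div 2)" by simp
  then have "isom (L2d d) (opF d a) (trv (L2d d) (eps 1) (- a) (bil (L2d d) a a div 2))"
    unfolding opF_def using assms by (intro trv_isom symL eps_lv) (auto simp: coordsS eps_app)
  then show ?thesis by blast
qed

lemma opF_app: "opF d a x k = x k - bil (L2d d) a x * eps 1 k + x 0 * a k - (bil (L2d d) a a div 2) * x 0 * eps 1 k"
  by (simp add: opF_def trv_app coordsS)

definition negs :: "nat \<Rightarrow> int" where "negs i = (if i < 4 then -1 else 1)"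

lemma neg_iso: "isom (L2d d) (smap negs) (smap negs)"
  by (rule smap_isom) (auto simp: negs_def sndL G21_def split: if_splits)

lemma step: "eqv L r y \<Longrightarrow> \<exists>h. isom L g h \<Longrightarrow> eqv L r (g y)"
  using eqv_step by blast


lemma abs_mod_less: "(b::int) \<noteq> 0 \<Longrightarrow> \<bar>a mod b\<bar> < \<bar>b\<bar>"
proof (cases "b > 0")
  case True then show ?thesis using pos_mod_sign[of b a] pos_mod_bound[of b a] by simp
next
  case False
  assume "b \<noteq> 0" then have "b < 0" using False by simp
  then show ?thesis using neg_mod_sign[of b a] neg_mod_bound[of b a] by simp
qed

lemma mod_eq': "(a::int) + b * (- (a div b)) = a mod b"
  by (simp add: minus_div_mult_eq_mod[symmetric] algebra_simps)

definition good :: "int \<Rightarrow> vec \<Rightarrow> int \<Rightarrow> bool" where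
  "good d r m \<longleftrightarrow> m > 0 \<and> (\<exists>x. eqv (L2d d) r x \<and> \<bar>x 0\<bar> = m) \<and>
     (\<forall>y. eqv (L2d d) r y \<longrightarrow> y 0 \<noteq> 0 \<longrightarrow> m \<le> \<bar>y 0\<bar>)"

lemma goodD: "good d r m \<Longrightarrow> eqv (L2d d) r y \<Longrightarrow> y 0 \<noteq> 0 \<Longrightarrow> m \<le> \<bar>y 0\<bar>"
  unfolding good_def by blast

lemma S2: assumes "good d r m" "eqv (L2d d) r y" "y 2 \<noteq> 0" shows "m \<le> \<bar>y 2\<bar>"
proof -
  let ?\<rho> = "y 2"
  define z where "z = opC d (- (y 0 div ?\<rho>)) y"
  have zo: "eqv (L2d d) r z" unfolding z_def by (rule step[OF assms(2) opC_iso])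
  have z0: "z 0 = y 0 mod ?\<rho>" unfolding z_def opC_app by (simp add: eps_app mod_eq'[symmetric] algebra_simps)
  have z2: "z 2 = ?\<rho>" unfolding z_def opC_app by (simp add: eps_app)
  show ?thesis
  proof (cases "y 0 mod ?\<rho> = 0")
    case False
    then have "m \<le> \<bar>y 0 mod ?\<rho>\<bar>" using goodD[OF assms(1) zo] z0 by simp
    then show ?thesis using abs_mod_less[OF assms(3), of "y 0"] by simp
  next
    case True
    define w where "w = opC d 1 z"
    have wo: "eqv (L2d d) r w" unfolding w_def by (rule step[OF zo opC_iso])
    have "w 0 = ?\<rho>" unfolding w_def opC_app using z0 z2 True by (simp add: eps_app)
    then show ?thesis using goodD[OF assms(1) wo] assms(3) by simp
  qed
qed

lemma S3: assumes "good d r m" "eqv (L2d d) r y" "y 3 \<noteq> 0" shows "m \<le> \<bar>y 3\<bar>"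
proof -
  let ?\<rho> = "y 3"
  define z where "z = opA d (y 0 div ?\<rho>) y"
  have zo: "eqv (L2d d) r z" unfolding z_def by (rule step[OF assms(2) opA_iso])
  have z0: "z 0 = y 0 mod ?\<rho>" unfolding z_def opA_app by (simp add: eps_app minus_div_mult_eq_mod[symmetric] algebra_simps)
  have z3: "z 3 = ?\<rho>" unfolding z_def opA_app by (simp add: eps_app)
  show ?thesis
  proof (cases "y 0 mod ?\<rho> = 0")
    case False
    then have "m \<le> \<bar>y 0 mod ?\<rho>\<bar>" using goodD[OF assms(1) zo] z0 by simp
    then show ?thesis using abs_mod_less[OF assms(3), of "y 0"] by simp
  next
    case True
    define w where "w = opA d (-1) z"
    have wo: "eqv (L2d d) r w" unfolding w_def by (rule step[OF zo opA_iso])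
    have "w 0 = ?\<rho>" unfolding w_def opA_app using z0 z3 True by (simp add: eps_app)
    then show ?thesis using goodD[OF assms(1) wo] assms(3) by simp
  qed
qed

lemma C1: assumes "good d r m" "eqv (L2d d) r x" "\<bar>x 0\<bar> = m" shows "x 0 dvd x 2"
proof (rule ccontr)
  assume nd: "\<not> x 0 dvd x 2"
  have m0: "m > 0" using assms(1) unfolding good_def by simp
  then have x0: "x 0 \<noteq> 0" using assms(3) by auto
  define z where "z = opD d (- (x 2 div x 0)) x"
  have zo: "eqv (L2d d) r z" unfolding z_def by (rule step[OF assms(2) opD_iso])
  have z2: "z 2 = x 2 mod x 0" unfolding z_def opD_app by (simp add: eps_app mod_eq'[symmetric] algebra_simps)
  have "z 2 \<noteq> 0" using nd z2 by (simp add: dvd_eq_mod_eq_0)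
  then have "m \<le> \<bar>z 2\<bar>" by (rule S2[OF assms(1) zo])
  then show False using abs_mod_less[OF x0, of "x 2"] z2 assms(3) by simp
qed

lemma C2: assumes "good d r m" "eqv (L2d d) r x" "\<bar>x 0\<bar> = m" shows "x 0 dvd x 3"
proof (rule ccontr)
  assume nd: "\<not> x 0 dvd x 3"
  have m0: "m > 0" using assms(1) unfolding good_def by simp
  then have x0: "x 0 \<noteq> 0" using assms(3) by auto
  define z where "z = opB d (x 3 div x 0) x"
  have zo: "eqv (L2d d) r z" unfolding z_def by (rule step[OF assms(2) opB_iso])
  have z3: "z 3 = x 3 mod x 0" unfolding z_def opB_app by (simp add: eps_app minus_div_mult_eq_mod[symmetric] algebra_simps)
  have "z 3 \<noteq> 0" using nd z3 by (simp add: dvd_eq_mod_eq_0)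
  then have "m \<le> \<bar>z 3\<bar>" by (rule S3[OF assms(1) zo])
  then show False using abs_mod_less[OF x0, of "x 3"] z3 assms(3) by simp
qed


lemma ex_nz: assumes "bil (L2d d) r r \<noteq> 0" shows "\<exists>x. eqv (L2d d) r x \<and> x 0 \<noteq> 0"
proof (cases "r 0 = 0 \<and> r 1 = 0 \<and> r 2 = 0 \<and> r 3 = 0")
  case True
  have "\<exists>k. 4 \<le> k \<and> k < 21 \<and> bil (L2d d) r (eps k) \<noteq> 0"
  proof (rule ccontr)
    assume "\<not> ?thesis"
    then have nk: "\<And>k. 4 \<le> k \<Longrightarrow> k < 21 \<Longrightarrow> bil (L2d d) r (eps k) = 0" by blast
    have zz: "\<forall>j<21. r j * bil (L2d d) r (eps j) = 0"
    proof (intro allI impI)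
      fix j :: nat assume j: "j < 21"
      show "r j * bil (L2d d) r (eps j) = 0"
      proof (cases "j < 4")
        case True
        then have "j = 0 \<or> j = 1 \<or> j = 2 \<or> j = 3" by arith
        then have "r j = 0" using \<open>r 0 = 0 \<and> r 1 = 0 \<and> r 2 = 0 \<and> r 3 = 0\<close> by auto
        then show ?thesis by simp
      next
        case False then show ?thesis using nk j by simp
      qed
    qed
    have "(\<Sum>j<21. r j * bil (L2d d) r (eps j)) = 0" using zz by (intro sum.neutral) auto
    then have "bil (L2d d) r r = 0" using bil_expand[of "L2d d" r r] by (simp add: fstL)
    then show False using assms by simp
  qed
  then obtain k where k: "4 \<le> k" "k < 21" "bil (L2d d) r (eps k) \<noteq> 0" by blast
  define u where "u = opE d k r"
  have uo: "eqv (L2d d) r u" unfolding u_def by (rule step[OF eqv_refl opE_iso[OF k(1,2)]])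
  have u0: "u 0 = 0" and u2: "u 2 = - bil (L2d d) r (eps k)"
    unfolding u_def using True k by (simp_all add: opE_app eps_app)
  define x where "x = opC d 1 u"
  have "eqv (L2d d) r x" unfolding x_def by (rule step[OF uo opC_iso])
  moreover have "x 0 = u 2" unfolding x_def opC_app using u0 by (simp add: eps_app)
  ultimately show ?thesis using k u2 by auto
next
  case False
  then consider "r 0 \<noteq> 0" | "r 0 = 0" "r 2 \<noteq> 0" | "r 0 = 0" "r 2 = 0" "r 3 \<noteq> 0"
    | "r 0 = 0" "r 2 = 0" "r 3 = 0" "r 1 \<noteq> 0" by blast
  then show ?thesis
  proof cases
    case 1 then show ?thesis using eqv_refl by blast
  next
    case 2
    have "eqv (L2d d) r (opC d 1 r)" by (rule step[OF eqv_refl opC_iso])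
    moreover have "opC d 1 r 0 \<noteq> 0" using 2 by (simp add: opC_app eps_app)
    ultimately show ?thesis by blast
  next
    case 3
    have "eqv (L2d d) r (opA d (-1) r)" by (rule step[OF eqv_refl opA_iso])
    moreover have "opA d (-1) r 0 \<noteq> 0" using 3 by (simp add: opA_app eps_app)
    ultimately show ?thesis by blast
  next
    case 4
    have uo: "eqv (L2d d) r (opA d 1 r)" by (rule step[OF eqv_refl opA_iso])
    have "eqv (L2d d) r (opC d 1 (opA d 1 r))" by (rule step[OF uo opC_iso])
    moreover have "opC d 1 (opA d 1 r) 0 \<noteq> 0" using 4 by (simp add: opC_app opA_app eps_app)
    ultimately show ?thesis by blast
  qed
qed

lemma good_ex: assumes "bil (L2d d) r r \<noteq> 0" shows "\<exists>m. good d r m"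
proof -
  define P where "P n \<longleftrightarrow> n > 0 \<and> (\<exists>x. eqv (L2d d) r x \<and> nat \<bar>x 0\<bar> = n)" for n
  obtain x where x: "eqv (L2d d) r x" "x 0 \<noteq> 0" using ex_nz[OF assms] by blast
  have Px: "P (nat \<bar>x 0\<bar>)" unfolding P_def using x by auto
  define n0 where "n0 = (LEAST n. P n)"
  have Pn0: "P n0" unfolding n0_def by (rule LeastI[of P, OF Px])
  have mn: "\<And>n. P n \<Longrightarrow> n0 \<le> n" unfolding n0_def by (rule Least_le)
  have "good d r (int n0)"
    unfolding good_def
  proof (intro conjI allI impI)
    show "int n0 > 0" using Pn0 unfolding P_def by simp
    show "\<exists>x. eqv (L2d d) r x \<and> \<bar>x 0\<bar> = int n0" using Pn0 unfolding P_def by auto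
  next
    fix y assume "eqv (L2d d) r y" "y 0 \<noteq> 0"
    then have "P (nat \<bar>y 0\<bar>)" unfolding P_def by auto
    then have "n0 \<le> nat \<bar>y 0\<bar>" by (rule mn)
    then show "int n0 \<le> \<bar>y 0\<bar>" by simp
  qed
  then show ?thesis by blast
qed

lemma reduce1: assumes "bil (L2d d) r r \<noteq> 0"
  shows "\<exists>y. eqv (L2d d) r y \<and> y 0 > 0 \<and> y 2 = 0 \<and> y 3 = 0 \<and> y 0 dvd y 1 \<and>
     (\<forall>k. 4 \<le> k \<and> k < 21 \<longrightarrow> y 0 dvd bil (L2d d) y (eps k))"
proof -
  obtain m where g: "good d r m" using good_ex[OF assms] by blast
  obtain x where x: "eqv (L2d d) r x" "\<bar>x 0\<bar> = m" using g unfolding good_def by blast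
  have m0: "m > 0" using g unfolding good_def by simp
  have d2: "x 0 dvd x 2" by (rule C1[OF g x])
  have d3: "x 0 dvd x 3" by (rule C2[OF g x])
  define u where "u = opD d (- (x 2 div x 0)) x"
  have uo: "eqv (L2d d) r u" unfolding u_def by (rule step[OF x(1) opD_iso])
  have u0: "u 0 = x 0" and u2: "u 2 = 0" and u3: "u 3 = x 3"
    unfolding u_def opD_app using d2 by (simp_all add: eps_app)
  define y where "y = opB d (x 3 div x 0) u"
  have yo: "eqv (L2d d) r y" unfolding y_def by (rule step[OF uo opB_iso])
  have y0: "y 0 = x 0" and y2: "y 2 = 0" and y3: "y 3 = 0"
    unfolding y_def opB_app using u0 u2 u3 d3 by (simp_all add: eps_app)
  have ym: "\<bar>y 0\<bar> = m" using y0 x by simp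
  have dy1: "y 0 dvd y 1"
  proof -
    define z where "z = opA d 1 y"
    have zo: "eqv (L2d d) r z" unfolding z_def by (rule step[OF yo opA_iso])
    have "z 0 = y 0" "z 2 = y 1" unfolding z_def opA_app using y2 y3 by (simp_all add: eps_app)
    then show ?thesis using C1[OF g zo] ym by simp
  qed
  have dyk: "y 0 dvd bil (L2d d) y (eps k)" if k: "4 \<le> k" "k < 21" for k
  proof -
    define z where "z = opE d k y"
    have zo: "eqv (L2d d) r z" unfolding z_def by (rule step[OF yo opE_iso[OF k]])
    have "z 0 = y 0" "z 2 = - bil (L2d d) y (eps k)"
      unfolding z_def using y2 y3 k by (simp_all add: opE_app eps_app)
    then show ?thesis using C1[OF g zo] ym by simp
  qed
  show ?thesis
  proof (cases "y 0 > 0")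
    case True then show ?thesis using yo y2 y3 dy1 dyk by blast
  next
    case False
    define w where "w = smap negs y"
    have wo: "eqv (L2d d) r w" unfolding w_def by (rule eqv_step[OF yo neg_iso])
    have w0: "w 0 = - y 0" "w 1 = - y 1" "w 2 = 0" "w 3 = 0"
      unfolding w_def smap_def negs_def using y2 y3 by simp_all
    have wk: "bil (L2d d) w (eps k) = bil (L2d d) y (eps k)" if "4 \<le> k" "k < 21" for k
      by (rule nind) (use that in \<open>auto simp: w_def smap_def negs_def\<close>)
    have "w 0 > 0" using w0 False ym m0 by simp
    moreover have "w 0 dvd w 1" using dy1 w0 by simp
    moreover have "\<forall>k. 4 \<le> k \<and> k < 21 \<longrightarrow> w 0 dvd bil (L2d d) w (eps k)"
      using dyk wk w0 by simp
    ultimately show ?thesis using wo w0 by blast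
  qed
qed


lemma gcd_char: fixes S :: "int set" assumes "m \<in> S" "m \<ge> 0" "\<And>s. s \<in> S \<Longrightarrow> m dvd s"
  shows "Gcd S = m"
  by (rule Gcd_eqI) (use assms in auto)

lemma ldiv_y: assumes "y 0 > 0" "y 2 = 0" "y 3 = 0" "y 0 dvd y 1"
  "\<And>k. 4 \<le> k \<Longrightarrow> k < 21 \<Longrightarrow> y 0 dvd bil (L2d d) y (eps k)"
  shows "ldiv (L2d d) y = y 0"
  unfolding ldiv_def
proof (rule gcd_char)
  show "y 0 \<in> {bil (L2d d) y z |z. z \<in> lvecs (L2d d)}"
    using co1[of d y] eps_lv[of 1 d] by force
  show "0 \<le> y 0" using assms by simp
  fix s assume "s \<in> {bil (L2d d) y z |z. z \<in> lvecs (L2d d)}"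
  then obtain z where s: "s = bil (L2d d) y z" by auto
  have "y 0 dvd (\<Sum>j<21. z j * bil (L2d d) y (eps j))"
  proof (rule dvd_sum)
    fix j :: nat assume "j \<in> {..<21}"
    have "y 0 dvd bil (L2d d) y (eps j)"
    proof (cases "j < 4")
      case True
      then have "j = 0 \<or> j = 1 \<or> j = 2 \<or> j = 3" by arith
      then show ?thesis using assms by (auto simp: coordsS)
    next
      case False then show ?thesis using assms \<open>j \<in> {..<21}\<close> by simp
    qed
    then show "y 0 dvd z j * bil (L2d d) y (eps j)" by simp
  qed
  moreover have "bil (L2d d) y z = (\<Sum>j<21. z j * bil (L2d d) y (eps j))"
    using bil_expand[of "L2d d" y z] unfolding fstL .
  ultimately show "y 0 dvd s" unfolding s by simp
qed

definition zv :: "int \<Rightarrow> int \<Rightarrow> int \<Rightarrow> vec" where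
  "zv m h b = (\<lambda>k. if k = 0 then m else if k = 1 then h else if k = 20 then b else 0)"

lemma sum3: fixes f :: "nat \<Rightarrow> int" assumes "\<And>j. j \<noteq> 0 \<Longrightarrow> j \<noteq> 1 \<Longrightarrow> j \<noteq> 20 \<Longrightarrow> f j = 0"
  shows "(\<Sum>j<21. f j) = f 0 + f 1 + f 20"
proof -
  have "(\<Sum>j<21. f j) = (\<Sum>j\<in>{0,1,20}. f j)"
    by (rule sum.mono_neutral_right) (use assms in auto)
  then show ?thesis by simp
qed

lemma bil_zv: "bil (L2d d) (zv m h b) x = m * x 1 + h * x 0 - 2 * d * b * x 20"
proof -
  have "bil (L2d d) (zv m h b) x = bil (L2d d) x (zv m h b)" using bil_sym[OF symL] by metis
  also have "\<dots> = (\<Sum>j<21. zv m h b j * bil (L2d d) x (eps j))" using bil_expand[of "L2d d" x] unfolding fstL .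
  also have "\<dots> = zv m h b 0 * bil (L2d d) x (eps 0) + zv m h b 1 * bil (L2d d) x (eps 1)
      + zv m h b 20 * bil (L2d d) x (eps 20)"
    by (rule sum3) (simp add: zv_def)
  also have "\<dots> = m * x 1 + h * x 0 - 2 * d * b * x 20" by (simp add: zv_def coordsS)
  finally show ?thesis .
qed

lemma zv_lv: "zv m h b \<in> lvecs (L2d d)" by (simp add: zv_def lvecs_def fstL)

lemma reduce2: assumes "bil (L2d d) r r \<noteq> 0" "r \<in> lvecs (L2d d)"
  shows "\<exists>h b. eqv (L2d d) r (zv (ldiv (L2d d) r) h b) \<and> ldiv (L2d d) r dvd h \<and> ldiv (L2d d) r > 0"
proof -
  obtain y where yo: "eqv (L2d d) r y" and y0: "y 0 > 0" and y2: "y 2 = 0" and y3: "y 3 = 0"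
    and y1: "y 0 dvd y 1" and yk: "\<And>k. 4 \<le> k \<Longrightarrow> k < 21 \<Longrightarrow> y 0 dvd bil (L2d d) y (eps k)"
    using reduce1[OF assms(1)] by blast
  have yl: "y \<in> lvecs (L2d d)" using eqv_lvecs[OF yo assms(2)] .
  define m where "m = y 0"
  have ld: "ldiv (L2d d) r = m" using ldiv_y[OF y0 y2 y3 y1 yk] eqv_ldiv[OF yo assms(2)] m_def by simp
  have dA: "m dvd y i" if "4 \<le> i" "i < 12" for i
  proof -
    have h: "m dvd (\<Sum>j<8. y (j + 4) * e8 j k)" if "k < 8" for k
    proof -
      have "bil (L2d d) y (eps (k + 4)) = (\<Sum>j<8. y (j + 4) * e8 j k)" using that by (simp add: blockA)
      then show ?thesis using yk[of "k + 4"] that m_def by simp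
    qed
    have "m dvd (\<lambda>j. y (j + 4)) (i - 4)"
      using e8_unimod[where z="\<lambda>j. y (j + 4)" and m=m and i="i - 4"] h that by simp
    then show ?thesis using that by simp
  qed
  have dB: "m dvd y i" if "12 \<le> i" "i < 20" for i
  proof -
    have h: "m dvd (\<Sum>j<8. y (j + 12) * e8 j k)" if "k < 8" for k
    proof -
      have "bil (L2d d) y (eps (k + 12)) = (\<Sum>j<8. y (j + 12) * e8 j k)" using that by (simp add: blockB)
      then show ?thesis using yk[of "k + 12"] that m_def by simp
    qed
    have "m dvd (\<lambda>j. y (j + 12)) (i - 12)"
      using e8_unimod[where z="\<lambda>j. y (j + 12)" and m=m and i="i - 12"] h that by simp
    then show ?thesis using that by simp
  qed
  have dE: "m dvd y i" if "4 \<le> i" "i < 20" for i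
    using dA dB that by (cases "i < 12") auto
  define a where "a = (\<lambda>i. if 4 \<le> i \<and> i \<le> 20 then - (y i div m) else 0)"
  have al: "a \<in> lvecs (L2d d)" by (simp add: a_def lvecs_def fstL)
  have a0: "a 0 = 0" by (simp add: a_def)
  define z where "z = opF d a y"
  have zo: "eqv (L2d d) r z" unfolding z_def by (rule step[OF yo opF_iso[OF al a0]])
  have zeq: "z = zv m (z 1) (y 20 mod m)"
  proof
    fix k
    show "z k = zv m (z 1) (y 20 mod m) k"
    proof (cases "4 \<le> k \<and> k < 20")
      case True
      then have "y k + m * (- (y k div m)) = 0" using dE[of k] mod_eq'[of "y k" m] by simp
      then show ?thesis using True unfolding z_def opF_app by (simp add: eps_app a_def zv_def m_def)
    next
      case False
      then consider "k = 0" | "k = 1" | "k = 2" | "k = 3" | "k = 20" | "k \<ge> 21" by arith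
      then show ?thesis
      proof cases
        case 6
        then have "y k = 0" using yl by (simp add: lvecs_def fstL)
        then show ?thesis using 6 unfolding z_def opF_app by (simp add: eps_app a_def zv_def)
      next
        case 5 then show ?thesis using mod_eq'[of "y 20" m] unfolding z_def opF_app by (simp add: eps_app a_def zv_def m_def)
      qed (use y2 y3 in \<open>simp_all add: z_def opF_app eps_app a_def zv_def m_def\<close>)
    qed
  qed
  have dz: "m dvd z 1"
  proof -
    have "ldiv (L2d d) z = m" using eqv_ldiv[OF zo assms(2)] ld by simp
    moreover have "z 1 \<in> {bil (L2d d) z w |w. w \<in> lvecs (L2d d)}"
      using co0[of d z] eps_lv[of 0 d] by force
    then have "Gcd {bil (L2d d) z w |w. w \<in> lvecs (L2d d)} dvd z 1" by (rule Gcd_dvd)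
    ultimately show ?thesis unfolding ldiv_def by simp
  qed
  have "eqv (L2d d) r (zv (ldiv (L2d d) r) (z 1) (y 20 mod m))" using zo zeq ld by simp
  then show ?thesis using dz ld y0 m_def by auto
qed


definition gf :: "int \<Rightarrow> int \<Rightarrow> int \<Rightarrow> int \<Rightarrow> int \<Rightarrow> int \<Rightarrow> int \<Rightarrow> int" where
  "gf a b c p r q s = a * p * q + b * (p * s + r * q) + c * r * s"

definition tgt :: "int \<Rightarrow> int \<Rightarrow> int \<Rightarrow> int \<Rightarrow> int \<Rightarrow> int \<Rightarrow> int \<Rightarrow> bool" where
  "tgt a b c p r q s \<longleftrightarrow> (p * s - q * r)^2 = 1 \<and>
     (if even a \<and> even c then gf a b c p r p r = 0 \<and> gf a b c p r q s = 1 \<and> gf a b c q s q s = 0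
      else gf a b c p r p r = 1 \<and> gf a b c p r q s = 0 \<and> gf a b c q s q s = -1)"

lemma bin_a0: assumes "b^2 = 1" shows "\<exists>p r q s. tgt 0 b c p r q s"
proof -
  have bb: "b * b = 1" using assms by (simp add: power2_eq_square)
  show ?thesis
  proof (cases "even c")
    case True
    then obtain c2 where c2: "c = 2 * c2" by blast
    have "tgt 0 b c 1 0 (- c2) b" unfolding tgt_def gf_def using True bb c2
      by (simp add: algebra_simps power2_eq_square)
    then show ?thesis by blast
  next
    case False
    then have "even (1 - c)" by simp
    then obtain k where k: "1 - c = 2 * k" by (rule evenE)
    define p where "p = k * b"
    have g1: "gf 0 b c p 1 p 1 = 2 * k * (b * b) + c" by (simp add: gf_def p_def algebra_simps)
    have g2: "gf 0 b c p 1 (1 - b * p) (- b) = b * (1 - 2 * k * (b * b) - c)" by (simp add: gf_def p_def algebra_simps)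
    have z: "1 - 2 * k - c = 0" using k by simp
    have g3: "gf 0 b c (1 - b * p) (- b) (1 - b * p) (- b) = - 2 * (b * b) + 2 * k * (b * b) * (b * b) + c * (b * b)"
      by (simp add: gf_def p_def algebra_simps)
    have dt: "p * (- b) - (1 - b * p) * 1 = -1" by (simp add: p_def algebra_simps)
    have "tgt 0 b c p 1 (1 - b * p) (- b)" unfolding tgt_def using False g1 g2 g3 dt bb k z
      by simp
    then show ?thesis by blast
  qed
qed


lemma gf_trans: "gf a b c (p1 * t + r1) p1 (p2 * t + r2) p2 = gf (c + 2 * t * b + t^2 * a) (b + t * a) a p1 r1 p2 r2"
  by (simp add: gf_def algebra_simps power2_eq_square)

lemma abs_mod_less': "(b::int) \<noteq> 0 \<Longrightarrow> \<bar>a mod b\<bar> < \<bar>b\<bar>"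
proof (cases "b > 0")
  case True then show ?thesis using pos_mod_sign[of b a] pos_mod_bound[of b a] by simp
next
  case False
  assume "b \<noteq> 0" then have "b < 0" using False by simp
  then show ?thesis using neg_mod_sign[of b a] neg_mod_bound[of b a] by simp
qed

lemma bin_ind: "nat \<bar>a\<bar> = n \<Longrightarrow> a * c - b^2 = -1 \<Longrightarrow> \<exists>p r q s. tgt a b c p r q s"
proof (induction n arbitrary: a b c rule: less_induct)
  case (less n)
  consider "a = 0" | "a = 1" | "a = -1" | "\<bar>a\<bar> \<ge> 2" by linarith
  then show ?case
  proof cases
    case 1 then show ?thesis using less.prems bin_a0[of b c] by simp
  next
    case 2
    have "tgt a b c 1 0 (- b) 1" unfolding tgt_def gf_def using 2 less.prems
      by (simp add: power2_eq_square algebra_simps)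
    then show ?thesis by blast
  next
    case 3
    have "tgt a b c b 1 1 0" unfolding tgt_def gf_def using 3 less.prems
      by (simp add: power2_eq_square algebra_simps)
    then show ?thesis by blast
  next
    case 4
    then have a0: "a \<noteq> 0" by auto
    define t where "t = - (b div a)"
    define b' where "b' = b + t * a"
    define c' where "c' = c + 2 * t * b + t^2 * a"
    have bm: "b' = b mod a" unfolding b'_def t_def by (simp add: minus_div_mult_eq_mod[symmetric] algebra_simps)
    have bl: "\<bar>b'\<bar> < \<bar>a\<bar>" unfolding bm using abs_mod_less'[OF a0] .
    have det': "a * c' - b'^2 = -1" using less.prems(2) unfolding b'_def c'_def
      by (simp add: algebra_simps power2_eq_square)
    have b'0: "b' \<noteq> 0"
    proof
      assume "b' = 0"
      then have "a * c' = -1" using det' by simp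
      then have "\<bar>a\<bar> * \<bar>c'\<bar> = 1" by (metis abs_mult abs_minus_cancel abs_one)
      then have "\<bar>a\<bar> = 1" using zero_less_mult_iff by (metis abs_ge_zero int_one_le_iff_zero_less mult_le_cancel_left1 mult_cancel_left2 not_le order_antisym zero_less_one_class.zero_le_one zero_le_mult_iff less_le)
      then show False using 4 by simp
    qed
    have sq: "b'^2 < a^2" using bl by (metis abs_ge_zero power2_abs power_strict_mono zero_less_numeral)
    have sq1: "b'^2 \<ge> 1" using b'0 by (simp add: power2_eq_square) (metis abs_mult_self_eq int_one_le_iff_zero_less less_le zero_less_abs_iff zero_less_mult_iff)
    have ac: "a * c' = b'^2 - 1" using det' by simp
    have "\<bar>a\<bar> * \<bar>c'\<bar> < \<bar>a\<bar> * \<bar>a\<bar>"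
    proof -
      have "\<bar>a\<bar> * \<bar>c'\<bar> = \<bar>a * c'\<bar>" by (simp add: abs_mult)
      also have "\<dots> = b'^2 - 1" using ac sq1 by simp
      also have "\<dots> < a^2" using sq by simp
      also have "\<dots> = \<bar>a\<bar> * \<bar>a\<bar>" by (simp add: power2_eq_square abs_mult_self_eq)
      finally show ?thesis .
    qed
    then have cl: "\<bar>c'\<bar> < \<bar>a\<bar>" using a0 by (metis mult_less_cancel_left_pos zero_less_abs_iff)
    have "nat \<bar>c'\<bar> < n" using cl less.prems(1) by simp
    moreover have "c' * a - b'^2 = -1" using det' by (simp add: algebra_simps)
    ultimately obtain p' r' q' s' where T: "tgt c' b' a p' r' q' s'" using less.IH by blast
    define p where "p = p' * t + r'"
    define q where "q = q' * t + s'"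
    have G: "gf a b c p p' p p' = gf c' b' a p' r' p' r'" "gf a b c p p' q q' = gf c' b' a p' r' q' s'"
       "gf a b c q q' q q' = gf c' b' a q' s' q' s'"
      unfolding p_def q_def b'_def c'_def by (rule gf_trans)+
    have D: "(p * q' - q * p')^2 = (p' * s' - q' * r')^2" unfolding p_def q_def
      by (simp add: algebra_simps power2_eq_square)
    have P: "(even a \<and> even c) = (even c' \<and> even a)" unfolding c'_def
      by (cases "even a") (auto simp: power2_eq_square)
    have "tgt a b c p p' q q'" using T unfolding tgt_def G D P by simp
    then show ?thesis by blast
  qed
qed

lemma bin: "a * c - b^2 = -1 \<Longrightarrow> \<exists>p r q s. tgt a b c p r q s"
  using bin_ind by blast


definition MA :: glat where "MA = Hyp \<oplus> Hyp \<oplus> E8neg \<oplus> E8neg"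

lemma fstMA: "fst MA = 20" by (simp add: MA_def osum_simps)

lemma sndMA: assumes "i < 20" "j < 20" shows "snd MA i j = G21 d i j"
proof -
  have ci: "i < 2 \<or> (2 \<le> i \<and> i < 4) \<or> (4 \<le> i \<and> i < 12) \<or> (12 \<le> i \<and> i < 20)" using assms by arith
  have cj: "j < 2 \<or> (2 \<le> j \<and> j < 4) \<or> (4 \<le> j \<and> j < 12) \<or> (12 \<le> j \<and> j < 20)" using assms by arith
  from ci cj show ?thesis unfolding MA_def
    by (elim disjE conjE) (auto simp add: osum_simps snd_Hyp G21_def e8_def)
qed

lemma sum20A: fixes c :: "nat \<Rightarrow> int"
  shows "(\<Sum>i<20. c i * (if i = 0 then w1 else if i = 1 then w2 else eps i) j)
     = c 0 * w1 j + c 1 * w2 j + (if 2 \<le> j \<and> j < 20 then c j else 0)"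
proof -
  have e: "{..<20::nat} = insert 0 (insert 1 {2..<20})" by auto
  have "(\<Sum>i\<in>{2..<20}. c i * (if i = 0 then w1 else if i = 1 then w2 else eps i) j)
      = (\<Sum>i\<in>{2..<20}. c i * (if i = j then 1 else 0))"
    by (rule sum.cong) (auto simp: eps_app)
  also have "\<dots> = (if 2 \<le> j \<and> j < 20 then c j else 0)"
  proof (cases "2 \<le> j \<and> j < 20")
    case True
    have "(\<Sum>i\<in>{2..<20}. c i * (if i = j then 1 else 0)) = (\<Sum>i\<in>{j}. c i * (if i = j then 1 else 0))"
      by (rule sum.mono_neutral_right) (use True in auto)
    then show ?thesis using True by simp
  next
    case False
    then show ?thesis by (intro trans[OF sum.neutral]) auto
  qed
  finally show ?thesis unfolding e by simp
qed

lemma zv_app: "zv m h b j = (if j = 0 then m else if j = 1 then h else if j = 20 then b else 0)"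
  by (simp add: zv_def)

lemma bil_zvzv: "bil (L2d d) (zv p h1 r) (zv q h2 s) = p * h2 + h1 * q - 2 * d * r * s"
  by (simp add: bil_zv zv_app)

lemma bil_zv_eps: "2 \<le> j \<Longrightarrow> j < 20 \<Longrightarrow> bil (L2d d) (zv p h1 r) (eps j) = 0"
  by (simp add: bil_zv eps_app)
lemma bil_eps_zv: "2 \<le> j \<Longrightarrow> j < 20 \<Longrightarrow> bil (L2d d) (eps j) (zv p h1 r) = 0"
  using bil_zv_eps bil_sym[OF symL] by metis

lemma perp_zv: assumes "m \<noteq> 0" "h = m * k" "2 * d * b = m * al"
  shows "x \<in> perp (L2d d) (zv m h b) \<longleftrightarrow> x \<in> lvecs (L2d d) \<and> x 1 = al * x 20 - k * x 0"
proof -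
  have "bil (L2d d) (zv m h b) x = m * (x 1 + k * x 0 - al * x 20)"
    unfolding bil_zv using assms(2,3) by (simp add: algebra_simps)
  then show ?thesis unfolding perp_def using assms(1) by auto
qed

lemma gf_zv: "bil (L2d d) (zv p (al * r - k * p) r) (zv q (al * s - k * q) s) = gf (-2 * k) al (-2 * d) p r q s"
  by (simp add: bil_zvzv gf_def algebra_simps)

lemma layoutA:
  fixes d m h b k al p r q s :: int
  assumes m0: "m \<noteq> 0" and hk: "h = m * k" and ba: "2 * d * b = m * al"
    and det: "(p * s - q * r)^2 = 1"
    and g1: "gf (-2 * k) al (-2 * d) p r p r = 0" and g2: "gf (-2 * k) al (-2 * d) p r q s = 1"
    and g3: "gf (-2 * k) al (-2 * d) q s q s = 0"
  shows "sub_iso (L2d d) (perp (L2d d) (zv m h b)) MA"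
proof -
  define w1 where "w1 = zv p (al * r - k * p) r"
  define w2 where "w2 = zv q (al * s - k * q) s"
  define f where "f i = (if i = 0 then w1 else if i = 1 then w2 else eps i)" for i
  note P = perp_zv[OF m0 hk ba]
  have fp: "\<forall>i<20. f i \<in> perp (L2d d) (zv m h b)"
  proof (intro allI impI)
    fix i :: nat assume i: "i < 20"
    show "f i \<in> perp (L2d d) (zv m h b)"
    proof (cases "i < 2")
      case True
      then show ?thesis unfolding P f_def w1_def w2_def using zv_lv[of _ _ _ d]
        by (auto simp: zv_app algebra_simps)
    next
      case False
      then show ?thesis unfolding P f_def using i eps_lv[of i d] by (simp add: eps_app)
    qed
  qed
  have gram: "\<forall>i<20. \<forall>j<20. bil (L2d d) (f i) (f j) = snd MA i j"
  proof (intro allI impI)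
    fix i j :: nat assume i: "i < 20" and j: "j < 20"
    have s: "snd MA i j = G21 d i j" using sndMA[OF i j] .
    have gs: "gf (-2 * k) al (-2 * d) q s p r = gf (-2 * k) al (-2 * d) p r q s" by (simp add: gf_def algebra_simps)
    have w: "bil (L2d d) w1 w1 = 0" "bil (L2d d) w1 w2 = 1" "bil (L2d d) w2 w1 = 1" "bil (L2d d) w2 w2 = 0"
      unfolding w1_def w2_def gf_zv using g1 g2 g3 gs by simp_all
    consider "i < 2" "j < 2" | "i < 2" "2 \<le> j" | "2 \<le> i" "j < 2" | "2 \<le> i" "2 \<le> j" by arith
    then show "bil (L2d d) (f i) (f j) = snd MA i j"
    proof cases
      case 1
      then have "i = 0 \<or> i = 1" "j = 0 \<or> j = 1" by auto
      then show ?thesis unfolding s f_def using w by (auto simp: G21_def)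
    next
      case 2
      have "G21 d i j = 0" using 2 j by (simp add: G21_def)
      moreover have "f i = zv (if i = 0 then p else q) (if i = 0 then al * r - k * p else al * s - k * q) (if i = 0 then r else s)"
        using 2 unfolding f_def w1_def w2_def by auto
      ultimately show ?thesis unfolding s using 2 j bil_zv_eps by (simp add: f_def)
    next
      case 3
      have "G21 d i j = 0" using 3 i by (simp add: G21_def)
      moreover have "f j = zv (if j = 0 then p else q) (if j = 0 then al * r - k * p else al * s - k * q) (if j = 0 then r else s)"
        using 3 unfolding f_def w1_def w2_def by auto
      ultimately show ?thesis unfolding s using 3 i bil_eps_zv by (simp add: f_def)
    next
      case 4
      then show ?thesis unfolding s f_def using i j epsk_eps[of i j d] by simp
    qed
  qed
  have uniq: "\<exists>!c. c \<in> lvecs MA \<and> x = (\<lambda>k. \<Sum>i<fst MA. c i * f i k)" if x: "x \<in> perp (L2d d) (zv m h b)" for x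
  proof -
    have xl: "x \<in> lvecs (L2d d)" and x1: "x 1 = al * x 20 - k * x 0" using x P by auto
    have x21: "\<And>j. j \<ge> 21 \<Longrightarrow> x j = 0" using xl by (simp add: lvecs_def fstL)
    define dl where "dl = p * s - q * r"
    have dl2: "dl * dl = 1" using det unfolding dl_def by (simp add: power2_eq_square)
    have ev: "(\<lambda>j. \<Sum>i<fst MA. c i * f i j) = (\<lambda>j. c 0 * w1 j + c 1 * w2 j + (if 2 \<le> j \<and> j < 20 then c j else 0))" for c
      unfolding fstMA f_def using sum20A[of c w1 w2] by simp
    define c where "c i = (if i = 0 then dl * (s * x 0 - q * x 20) else if i = 1 then dl * (p * x 20 - r * x 0)
       else if i < 20 then x i else 0)" for i
    have c0: "p * c 0 + q * c 1 = x 0" and c1: "r * c 0 + s * c 1 = x 20"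
    proof -
      have "p * c 0 + q * c 1 = dl * dl * x 0" unfolding c_def dl_def by (simp add: algebra_simps)
      then show "p * c 0 + q * c 1 = x 0" using dl2 by simp
      have "r * c 0 + s * c 1 = dl * dl * x 20" unfolding c_def dl_def by (simp add: algebra_simps)
      then show "r * c 0 + s * c 1 = x 20" using dl2 by simp
    qed
    show ?thesis
    proof (rule ex1I[of _ c])
      show "c \<in> lvecs MA \<and> x = (\<lambda>k. \<Sum>i<fst MA. c i * f i k)"
      proof
        show "c \<in> lvecs MA" by (simp add: lvecs_def fstMA c_def)
        show "x = (\<lambda>k. \<Sum>i<fst MA. c i * f i k)"
          unfolding ev
        proof
          fix j :: nat
          consider "j = 0" | "j = 1" | "j = 20" | "2 \<le> j \<and> j < 20" | "j \<ge> 21" by arith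
          then show "x j = c 0 * w1 j + c 1 * w2 j + (if 2 \<le> j \<and> j < 20 then c j else 0)"
          proof cases
            case 1 then show ?thesis using c0 by (simp add: w1_def w2_def zv_app algebra_simps)
          next
            case 2
            have "c 0 * (al * r - k * p) + c 1 * (al * s - k * q) = al * (r * c 0 + s * c 1) - k * (p * c 0 + q * c 1)"
              by (simp add: algebra_simps)
            then show ?thesis using 2 c0 c1 x1 by (simp add: w1_def w2_def zv_app)
          next
            case 3 then show ?thesis using c1 by (simp add: w1_def w2_def zv_app algebra_simps)
          next
            case 4 then show ?thesis by (simp add: w1_def w2_def zv_app c_def)
          next
            case 5 then show ?thesis using x21 by (simp add: w1_def w2_def zv_app)
          qed
        qed
      qed
    next
      fix c' assume c': "c' \<in> lvecs MA \<and> x = (\<lambda>k. \<Sum>i<fst MA. c' i * f i k)"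
      then have xe: "\<And>j. x j = c' 0 * w1 j + c' 1 * w2 j + (if 2 \<le> j \<and> j < 20 then c' j else 0)"
        unfolding ev by simp
      have e0: "x 0 = p * c' 0 + q * c' 1" using xe[of 0] by (simp add: w1_def w2_def zv_app algebra_simps)
      have e20: "x 20 = r * c' 0 + s * c' 1" using xe[of 20] by (simp add: w1_def w2_def zv_app algebra_simps)
      show "c' = c"
      proof
        fix i :: nat
        consider "i = 0" | "i = 1" | "2 \<le> i \<and> i < 20" | "i \<ge> 20" by arith
        then show "c' i = c i"
        proof cases
          case 1
          have "c 0 = dl * dl * c' 0" unfolding c_def e0 e20 dl_def by (simp add: algebra_simps)
          then show ?thesis using 1 dl2 by simp
        next
          case 2
          have "c 1 = dl * dl * c' 1" unfolding c_def e0 e20 dl_def by (simp add: algebra_simps)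
          then show ?thesis using 2 dl2 by simp
        next
          case 3 then show ?thesis using xe[of i] by (simp add: c_def w1_def w2_def zv_app)
        next
          case 4 then show ?thesis using c' by (simp add: lvecs_def fstMA c_def)
        qed
      qed
    qed
  qed
  show ?thesis unfolding sub_iso_def fstMA using fp gram uniq[unfolded fstMA] by blast
qed


definition MB :: "glat \<Rightarrow> glat" where "MB X = Hyp \<oplus> E8neg \<oplus> E8neg \<oplus> X"

lemma fstMB: "fst X = 2 \<Longrightarrow> fst (MB X) = 20" by (simp add: MB_def osum_simps)

lemma sndMB: assumes "bnd X" "fst X = 2" "i < 20" "j < 20"
  shows "snd (MB X) i j = (if i < 18 \<and> j < 18 then G21 d (i + 2) (j + 2)
     else if 18 \<le> i \<and> 18 \<le> j then snd X (i - 18) (j - 18) else 0)"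
proof -
  have ci: "i < 2 \<or> (2 \<le> i \<and> i < 10) \<or> (10 \<le> i \<and> i < 18) \<or> (18 \<le> i \<and> i < 20)" using assms by arith
  have cj: "j < 2 \<or> (2 \<le> j \<and> j < 10) \<or> (10 \<le> j \<and> j < 18) \<or> (18 \<le> j \<and> j < 20)" using assms by arith
  from ci cj show ?thesis unfolding MB_def using assms(1,2)
    by (elim disjE conjE) (auto simp add: osum_simps snd_Hyp G21_def e8_def)
qed

lemma sum20B: fixes c :: "nat \<Rightarrow> int"
  shows "(\<Sum>i<20. c i * (if i < 18 then eps (i + 2) else if i = 18 then w1 else w2) j)
     = (if 2 \<le> j \<and> j < 20 then c (j - 2) else 0) + c 18 * w1 j + c 19 * w2 j"
proof -
  have e: "{..<20::nat} = insert 18 (insert 19 {..<18})" by auto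
  have "(\<Sum>i<18. c i * (if i < 18 then eps (i + 2) else if i = 18 then w1 else w2) j)
      = (\<Sum>i<18. c i * (if i = j - 2 \<and> 2 \<le> j then 1 else 0))"
    by (rule sum.cong) (auto simp: eps_app)
  also have "\<dots> = (if 2 \<le> j \<and> j < 20 then c (j - 2) else 0)"
  proof (cases "2 \<le> j \<and> j < 20")
    case True
    have "(\<Sum>i<18. c i * (if i = j - 2 \<and> 2 \<le> j then 1 else 0)) = (\<Sum>i\<in>{j - 2}. c i * (if i = j - 2 \<and> 2 \<le> j then 1 else 0))"
      by (rule sum.mono_neutral_right) (use True in auto)
    then show ?thesis using True by simp
  next
    case False
    then show ?thesis by (intro trans[OF sum.neutral]) auto
  qed
  finally show ?thesis unfolding e by simp
qed

lemma layoutB: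
  fixes d m h b k al p r q s :: int
  assumes m0: "m \<noteq> 0" and hk: "h = m * k" and ba: "2 * d * b = m * al"
    and det: "(p * s - q * r)^2 = 1" and X: "bnd X" "fst X = 2"
    and g1: "gf (-2 * k) al (-2 * d) p r p r = snd X 0 0" and g2: "gf (-2 * k) al (-2 * d) p r q s = snd X 0 1"
    and g2': "snd X 1 0 = snd X 0 1"
    and g3: "gf (-2 * k) al (-2 * d) q s q s = snd X 1 1"
  shows "sub_iso (L2d d) (perp (L2d d) (zv m h b)) (MB X)"
proof -
  define w1 where "w1 = zv p (al * r - k * p) r"
  define w2 where "w2 = zv q (al * s - k * q) s"
  define f where "f i = (if i < 18 then eps (i + 2) else if i = 18 then w1 else w2)" for i
  note P = perp_zv[OF m0 hk ba]
  have fM: "fst (MB X) = 20" using fstMB[OF X(2)] .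
  have fp: "\<forall>i<20. f i \<in> perp (L2d d) (zv m h b)"
  proof (intro allI impI)
    fix i :: nat assume i: "i < 20"
    show "f i \<in> perp (L2d d) (zv m h b)"
    proof (cases "i < 18")
      case False
      then show ?thesis unfolding P f_def w1_def w2_def using zv_lv[of _ _ _ d]
        by (auto simp: zv_app algebra_simps)
    next
      case True
      then show ?thesis unfolding P f_def using eps_lv[of "i + 2" d] by (simp add: eps_app)
    qed
  qed
  have gram: "\<forall>i<20. \<forall>j<20. bil (L2d d) (f i) (f j) = snd (MB X) i j"
  proof (intro allI impI)
    fix i j :: nat assume i: "i < 20" and j: "j < 20"
    note s = sndMB[OF X i j, of d]
    have gs: "gf (-2 * k) al (-2 * d) q s p r = gf (-2 * k) al (-2 * d) p r q s" by (simp add: gf_def algebra_simps)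
    have w: "bil (L2d d) w1 w1 = snd X 0 0" "bil (L2d d) w1 w2 = snd X 0 1" "bil (L2d d) w2 w1 = snd X 1 0" "bil (L2d d) w2 w2 = snd X 1 1"
      unfolding w1_def w2_def gf_zv using g1 g2 g3 gs g2' by simp_all
    consider "18 \<le> i" "18 \<le> j" | "18 \<le> i" "j < 18" | "i < 18" "18 \<le> j" | "i < 18" "j < 18" by arith
    then show "bil (L2d d) (f i) (f j) = snd (MB X) i j"
    proof cases
      case 1
      then have "i = 18 \<or> i = 19" "j = 18 \<or> j = 19" using i j by auto
      then show ?thesis unfolding s f_def using w by auto
    next
      case 2
      have "f i = zv (if i = 18 then p else q) (if i = 18 then al * r - k * p else al * s - k * q) (if i = 18 then r else s)"
        using 2 unfolding f_def w1_def w2_def by auto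
      then show ?thesis unfolding s using 2 j bil_zv_eps[of "j + 2" d] by (simp add: f_def)
    next
      case 3
      have "f j = zv (if j = 18 then p else q) (if j = 18 then al * r - k * p else al * s - k * q) (if j = 18 then r else s)"
        using 3 unfolding f_def w1_def w2_def by auto
      then show ?thesis unfolding s using 3 i bil_eps_zv[of "i + 2" d] by (simp add: f_def)
    next
      case 4
      then show ?thesis unfolding s f_def using i j epsk_eps[of "i + 2" "j + 2" d] by simp
    qed
  qed
  have uniq: "\<exists>!c. c \<in> lvecs (MB X) \<and> x = (\<lambda>k. \<Sum>i<20. c i * f i k)" if x: "x \<in> perp (L2d d) (zv m h b)" for x
  proof -
    have xl: "x \<in> lvecs (L2d d)" and x1: "x 1 = al * x 20 - k * x 0" using x P by auto
    have x21: "\<And>j. j \<ge> 21 \<Longrightarrow> x j = 0" using xl by (simp add: lvecs_def fstL)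
    define dl where "dl = p * s - q * r"
    have dl2: "dl * dl = 1" using det unfolding dl_def by (simp add: power2_eq_square)
    have ev: "(\<lambda>j. \<Sum>i<20. c i * f i j) = (\<lambda>j. (if 2 \<le> j \<and> j < 20 then c (j - 2) else 0) + c 18 * w1 j + c 19 * w2 j)" for c
      unfolding f_def using sum20B[of c w1 w2] by simp
    define c where "c i = (if i = 18 then dl * (s * x 0 - q * x 20) else if i = 19 then dl * (p * x 20 - r * x 0)
       else if i < 18 then x (i + 2) else 0)" for i
    have c0: "p * c 18 + q * c 19 = x 0" and c1: "r * c 18 + s * c 19 = x 20"
    proof -
      have "p * c 18 + q * c 19 = dl * dl * x 0" unfolding c_def dl_def by (simp add: algebra_simps)
      then show "p * c 18 + q * c 19 = x 0" using dl2 by simp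
      have "r * c 18 + s * c 19 = dl * dl * x 20" unfolding c_def dl_def by (simp add: algebra_simps)
      then show "r * c 18 + s * c 19 = x 20" using dl2 by simp
    qed
    show ?thesis
    proof (rule ex1I[of _ c])
      show "c \<in> lvecs (MB X) \<and> x = (\<lambda>k. \<Sum>i<20. c i * f i k)"
      proof
        show "c \<in> lvecs (MB X)" by (simp add: lvecs_def fM c_def)
        show "x = (\<lambda>k. \<Sum>i<20. c i * f i k)"
          unfolding ev
        proof
          fix j :: nat
          consider "j = 0" | "j = 1" | "j = 20" | "2 \<le> j \<and> j < 20" | "j \<ge> 21" by arith
          then show "x j = (if 2 \<le> j \<and> j < 20 then c (j - 2) else 0) + c 18 * w1 j + c 19 * w2 j"
          proof cases
            case 1 then show ?thesis using c0 by (simp add: w1_def w2_def zv_app algebra_simps)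
          next
            case 2
            have "c 18 * (al * r - k * p) + c 19 * (al * s - k * q) = al * (r * c 18 + s * c 19) - k * (p * c 18 + q * c 19)"
              by (simp add: algebra_simps)
            then show ?thesis using 2 c0 c1 x1 by (simp add: w1_def w2_def zv_app)
          next
            case 3 then show ?thesis using c1 by (simp add: w1_def w2_def zv_app algebra_simps)
          next
            case 4
            then have "j - 2 < 18" "Suc (Suc (j - 2)) = j" by auto
            then show ?thesis using 4 by (simp add: w1_def w2_def zv_app c_def)
          next
            case 5 then show ?thesis using x21 by (simp add: w1_def w2_def zv_app)
          qed
        qed
      qed
    next
      fix c' assume c': "c' \<in> lvecs (MB X) \<and> x = (\<lambda>k. \<Sum>i<20. c' i * f i k)"
      then have xe: "\<And>j. x j = (if 2 \<le> j \<and> j < 20 then c' (j - 2) else 0) + c' 18 * w1 j + c' 19 * w2 j"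
        unfolding ev by simp
      have e0: "x 0 = p * c' 18 + q * c' 19" using xe[of 0] by (simp add: w1_def w2_def zv_app algebra_simps)
      have e20: "x 20 = r * c' 18 + s * c' 19" using xe[of 20] by (simp add: w1_def w2_def zv_app algebra_simps)
      show "c' = c"
      proof
        fix i :: nat
        consider "i = 18" | "i = 19" | "i < 18" | "i \<ge> 20" by arith
        then show "c' i = c i"
        proof cases
          case 1
          have "c 18 = dl * dl * c' 18" unfolding c_def e0 e20 dl_def by (simp add: algebra_simps)
          then show ?thesis using 1 dl2 by simp
        next
          case 2
          have "c 19 = dl * dl * c' 19" unfolding c_def e0 e20 dl_def by (simp add: algebra_simps)
          then show ?thesis using 2 dl2 by simp
        next
          case 3 then show ?thesis using xe[of "i + 2"] by (simp add: c_def w1_def w2_def zv_app)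
        next
          case 4 then show ?thesis using c' by (simp add: lvecs_def fM c_def)
        qed
      qed
    qed
  qed
  show ?thesis unfolding sub_iso_def fM using fp gram[unfolded fM] uniq by blast
qed


lemma gf_scale: "gf (-2 * k) (2 * b) (-2 * d) x y z w = 2 * gf (-k) b (-d) x y z w"
  by (simp add: gf_def algebra_simps)
lemma gf_scale': "gf (- (2 * k)) (2 * b) (- (2 * d)) x y z w = 2 * gf (-k) b (-d) x y z w"
  by (simp add: gf_def algebra_simps)

theorem proposition4p6:
  fixes d :: int and r :: "nat \<Rightarrow> int"
  assumes "d \<ge> 1"
    and "r \<in> lvecs (L2d d)"
    and "primitive (L2d d) r"
    and "bil (L2d d) r r = -2 * d"
  shows "(ldiv (L2d d) r = 2 * d \<longrightarrow>
            sub_iso (L2d d) (perp (L2d d) r) (Hyp \<oplus> Hyp \<oplus> E8neg \<oplus> E8neg))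
       \<and> (ldiv (L2d d) r = d \<longrightarrow>
            sub_iso (L2d d) (perp (L2d d) r) (Hyp \<oplus> E8neg \<oplus> E8neg \<oplus> rk1 2 \<oplus> rk1 (-2))
          \<or> sub_iso (L2d d) (perp (L2d d) r) (Hyp \<oplus> E8neg \<oplus> E8neg \<oplus> Hyp2))"
proof -
  define m where "m = ldiv (L2d d) r"
  have d0: "d \<noteq> 0" using assms(1) by simp
  have rr: "bil (L2d d) r r \<noteq> 0" using assms(1,4) by simp
  obtain h b where E: "eqv (L2d d) r (zv m h b)" and mh: "m dvd h" and m0: "m > 0"
    using reduce2[OF rr assms(2)] unfolding m_def by blast
  obtain k where hk: "h = m * k" using mh by blast
  have "bil (L2d d) (zv m h b) (zv m h b) = -2 * d" using eqv_bil[OF E assms(2)] assms(4) by simp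
  then have eq: "m * h + h * m - 2 * d * b * b = -2 * d" by (simp add: bil_zvzv)
  have A: "sub_iso (L2d d) (perp (L2d d) r) (Hyp \<oplus> Hyp \<oplus> E8neg \<oplus> E8neg)" if m2: "m = 2 * d"
  proof -
    have "2 * d * (4 * d * k - b^2 + 1) = 0" using eq unfolding m2 hk by (simp add: algebra_simps power2_eq_square)
    then have "4 * d * k - b^2 + 1 = 0" using d0 by (metis mult_eq_0_iff zero_neq_numeral)
    then have "(-2 * k) * (-2 * d) - b^2 = -1" by (simp add: algebra_simps)
    then obtain p r' q s where T: "tgt (-2 * k) b (-2 * d) p r' q s" using bin by blast
    have ev: "even (-2 * k) \<and> even (-2 * d)" by simp
    have "sub_iso (L2d d) (perp (L2d d) (zv m h b)) MA"
      by (rule layoutA[where k=k and al=b and p=p and r=r' and q=q and s=s])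
        (use T ev m0 hk m2 in \<open>simp_all add: tgt_def\<close>)
    then show ?thesis using transport[OF E assms(2)] unfolding MA_def by blast
  qed
  have B: "sub_iso (L2d d) (perp (L2d d) r) (Hyp \<oplus> E8neg \<oplus> E8neg \<oplus> rk1 2 \<oplus> rk1 (-2))
          \<or> sub_iso (L2d d) (perp (L2d d) r) (Hyp \<oplus> E8neg \<oplus> E8neg \<oplus> Hyp2)" if m1: "m = d"
  proof -
    have "2 * d * (d * k - b^2 + 1) = 0" using eq unfolding m1 hk by (simp add: algebra_simps power2_eq_square)
    then have "d * k - b^2 + 1 = 0" using d0 by (metis mult_eq_0_iff zero_neq_numeral)
    then have "(- k) * (- d) - b^2 = -1" by (simp add: algebra_simps)
    then obtain p r' q s where T: "tgt (- k) b (- d) p r' q s" using bin by blast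
    have ba: "2 * d * b = m * (2 * b)" using m1 by simp
    show ?thesis
    proof (cases "even k \<and> even d")
      case True
      have X: "bnd Hyp2" "fst Hyp2 = 2" "snd Hyp2 0 0 = 0" "snd Hyp2 0 1 = 2" "snd Hyp2 1 0 = 2" "snd Hyp2 1 1 = 0"
        by (simp_all add: bnd_Hyp2 fsts) (simp_all add: Hyp2_def)
      have "sub_iso (L2d d) (perp (L2d d) (zv m h b)) (MB Hyp2)"
        by (rule layoutB[where k=k and al="2 * b" and p=p and r=r' and q=q and s=s])
          (use T True X m0 hk ba in \<open>simp_all add: tgt_def gf_scale gf_scale'\<close>)
      then show ?thesis using transport[OF E assms(2)] unfolding MB_def by blast
    next
      case False
      let ?X = "rk1 2 \<oplus> rk1 (-2)"
      have X: "bnd ?X" "fst ?X = 2" "snd ?X 0 0 = 2" "snd ?X 0 1 = 0" "snd ?X 1 0 = 0" "snd ?X 1 1 = -2"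
        by (simp_all add: osum_simps snd_rk1)
      have "sub_iso (L2d d) (perp (L2d d) (zv m h b)) (MB ?X)"
        by (rule layoutB[where k=k and al="2 * b" and p=p and r=r' and q=q and s=s])
          (use T False X m0 hk ba in \<open>simp_all add: tgt_def gf_scale gf_scale'\<close>)
      then show ?thesis using transport[OF E assms(2)] unfolding MB_def by blast
    qed
  qed
  show ?thesis using A B unfolding m_def by blast
qed


end
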